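(* There exists an injective $\mathbb C(q)$-algebra homomorphism $\theta:(U^0_{ev})^W\to R(\mathfrak g)$ such that $\theta\bigl(\sum_{\omega\in W}K^{\omega(\alpha)}\bigr)=\sum_{\omega\in W}e^{\omega(\alpha/2)}$ for all $\alpha\in Q\cap2\Lambda$. Moreover, the image of $\theta$ is the $\mathbb C(q)$-span of $\{\chi(L(\lambda)):\lambda\in\Psi\}$.
   Context: $\mathfrak g$ is a finite-dimensional simple complex Lie algebra with root lattice $Q$, weight lattice $\Lambda$, dominant integral weights $\Lambda^+$ and Weyl group $W$. $U^0$ is the group algebra of $Q$ over $\mathbb C(q)$ ($q$ an indeterminate) with basis $\{K^\alpha\}_{\alpha\in Q}$, $K^\alpha K^\beta=K^{\alpha+\beta}$, and $W$ acts by $\omega\cdot K^\alpha=K^{\omega(\alpha)}$; $U^0_{ev}=\bigoplus_{\alpha\in Q\cap 2\Lambda}\mathbb C(q)K^\alpha$ and $(U^0_{ev})^W$ its $W$-invariants. Let $\mathbb C(q)[\Lambda]$ be the group algebra of $\Lambda$ with basis $\{e^\mu\}_{\mu\in\Lambda}$. For $\lambda\in\Lambda^+$, $L(\lambda)$ is the irreducible finite-dimensional $\mathfrak g$-module of highest weight $\lambda$ and $\chi(L(\lambda))=\sum_\mu\dim L(\lambda)_\mu e^\mu$ its character. $R(\mathfrak g)=\mathbb C(q)\otimes_{\mathbb Z}r(\mathfrak g)$, where $r(\mathfrak g)$ is the representation (character) ring of $\mathfrak g$ with $\mathbb Z$-basis $\{\chi(L(\lambda)):\lambda\in\Lambda^+\}$;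 it is identified with the $\mathbb C(q)$-subalgebra of $\mathbb C(q)[\Lambda]$ spanned by these characters. $\Psi=\{\lambda\in\Lambda^+:2\lambda\in Q\}$. *)

theory Defs
  imports "HOL-Analysis.Analysis" "HOL-Library.Poly_Mapping"
    "HOL-Computational_Algebra.Polynomial" "HOL-Computational_Algebra.Fraction_Field"
begin

text \<open>The ground field C(q): rational functions in one indeterminate over the complex numbers.\<close>
type_synonym Cq = "complex poly fract"

text \<open>Ambient Euclidean space V = real^'n carrying the root system; the group algebra
  C(q)[V] (finitely supported functions V to C(q), convolution product) contains both
  U^0 = C(q)[Q] (with K^alpha = single alpha 1) and C(q)[Lambda] (with e^mu = single mu 1).\<close>
type_synonym 'n gring = "(real^'n::finite) \<Rightarrow>\<^sub>0 Cq"

definition gexp :: "real^'n::finite \<Rightarrow> 'n gring" where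
  "gexp mu = Poly_Mapping.single mu 1"

definition scal :: "Cq \<Rightarrow> ('n::finite) gring \<Rightarrow> 'n gring" where
  "scal c x = Poly_Mapping.single 0 c * x"

definition refl :: "real^'n::finite \<Rightarrow> real^'n \<Rightarrow> real^'n" where
  "refl a v = v - (2 * (v \<bullet> a) / (a \<bullet> a)) *\<^sub>R a"

definition root_system :: "(real^'n::finite) set \<Rightarrow> bool" where
  "root_system R \<longleftrightarrow> finite R \<and> 0 \<notin> R \<and> span R = UNIV \<and>
     (\<forall>a\<in>R. \<forall>b\<in>R. refl a b \<in> R) \<and>
     (\<forall>a\<in>R. \<forall>b\<in>R. 2 * (b \<bullet> a) / (a \<bullet> a) \<in> \<int>) \<and>
     (\<forall>a\<in>R. \<forall>c::real. c *\<^sub>R a \<in> R \<longrightarrow> c = 1 \<or> c = -1)"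

definition irreducible_rs :: "(real^'n::finite) set \<Rightarrow> bool" where
  "irreducible_rs R \<longleftrightarrow> \<not> (\<exists>R1 R2. R1 \<noteq> {} \<and> R2 \<noteq> {} \<and> R = R1 \<union> R2 \<and>
     (\<forall>a\<in>R1. \<forall>b\<in>R2. a \<bullet> b = 0))"

definition is_base :: "(real^'n::finite) set \<Rightarrow> (real^'n) set \<Rightarrow> bool" where
  "is_base R D \<longleftrightarrow> D \<subseteq> R \<and> independent D \<and>
     (\<forall>b\<in>R. \<exists>c::real^'n \<Rightarrow> int. b = (\<Sum>a\<in>D. of_int (c a) *\<^sub>R a) \<and>
        ((\<forall>a\<in>D. c a \<ge> 0) \<or> (\<forall>a\<in>D. c a \<le> 0)))"

definition pos_roots :: "(real^'n::finite) set \<Rightarrow> (real^'n) set \<Rightarrow> (real^'n) set" where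
  "pos_roots R D = {b\<in>R. \<exists>c::real^'n \<Rightarrow> int. b = (\<Sum>a\<in>D. of_int (c a) *\<^sub>R a) \<and>
        (\<forall>a\<in>D. c a \<ge> 0)}"

definition rho :: "(real^'n::finite) set \<Rightarrow> (real^'n) set \<Rightarrow> real^'n" where
  "rho R D = (1/2) *\<^sub>R (\<Sum>b\<in>pos_roots R D. b)"

definition root_lattice :: "(real^'n::finite) set \<Rightarrow> (real^'n) set" where
  "root_lattice R = {v. \<exists>c::real^'n \<Rightarrow> int. v = (\<Sum>a\<in>R. of_int (c a) *\<^sub>R a)}"

definition weight_lattice :: "(real^'n::finite) set \<Rightarrow> (real^'n) set" where
  "weight_lattice R = {v. \<forall>a\<in>R. 2 * (v \<bullet> a) / (a \<bullet> a) \<in> \<int>}"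

definition dominant :: "(real^'n::finite) set \<Rightarrow> (real^'n) set \<Rightarrow> (real^'n) set" where
  "dominant R D = {v \<in> weight_lattice R. \<forall>a\<in>D. v \<bullet> a \<ge> 0}"

inductive_set weyl_group :: "(real^'n::finite) set \<Rightarrow> (real^'n \<Rightarrow> real^'n) set" for R where
  id: "id \<in> weyl_group R"
| step: "w \<in> weyl_group R \<Longrightarrow> a \<in> R \<Longrightarrow> refl a \<circ> w \<in> weyl_group R"

definition wsgn :: "(real^'n::finite \<Rightarrow> real^'n) \<Rightarrow> Cq" where
  "wsgn w = (if det (matrix w) > 0 then 1 else -1)"

definition alt :: "(real^'n::finite) set \<Rightarrow> real^'n \<Rightarrow> 'n gring" where
  "alt R mu = (\<Sum>w\<in>weyl_group R. scal (wsgn w) (gexp (w mu)))"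

text \<open>Character chi(L(lambda)), via the Weyl character formula
  chi(L(lambda)) * A_rho = A_(lambda+rho).\<close>
definition character :: "(real^'n::finite) set \<Rightarrow> (real^'n) set \<Rightarrow> real^'n \<Rightarrow> 'n gring" where
  "character R D lam = (THE f. f * alt R (rho R D) = alt R (lam + rho R D))"

definition cspan :: "'n::finite gring set \<Rightarrow> 'n gring set" where
  "cspan S = {x. \<exists>F c. finite F \<and> F \<subseteq> S \<and> x = (\<Sum>f\<in>F. scal (c f) f)}"

definition rep_ring :: "(real^'n::finite) set \<Rightarrow> (real^'n) set \<Rightarrow> 'n gring set" where
  "rep_ring R D = cspan (character R D ` dominant R D)"

definition even_lattice :: "(real^'n::finite) set \<Rightarrow> (real^'n) set" where
  "even_lattice R = root_lattice R \<inter> (\<lambda>v. 2 *\<^sub>R v) ` weight_lattice R"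

definition U0ev_W :: "(real^'n::finite) set \<Rightarrow> 'n gring set" where
  "U0ev_W R = {x. Poly_Mapping.keys x \<subseteq> even_lattice R \<and>
     (\<forall>w\<in>weyl_group R. \<forall>mu. Poly_Mapping.lookup x (w mu) = Poly_Mapping.lookup x mu)}"

definition Psi :: "(real^'n::finite) set \<Rightarrow> (real^'n) set \<Rightarrow> (real^'n) set" where
  "Psi R D = {lam \<in> dominant R D. 2 *\<^sub>R lam \<in> root_lattice R}"

end

theory Submission
  imports Defs
begin


definition cp :: "real^'n::finite \<Rightarrow> real^'n \<Rightarrow> real" where
  "cp v a = 2 * (v \<bullet> a) / (a \<bullet> a)"

lemma refl_cp: "refl a v = v - cp v a *\<^sub>R a"
  by (simp add: refl_def cp_def)

lemma linear_refl: "linear (refl a)"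
  unfolding refl_def by (intro linear_compose_sub linear_id linearI) (auto simp: inner_add_left inner_scaleR_left add_divide_distrib algebra_simps)

lemma refl_refl[simp]: "refl a (refl a v) = v"
proof (cases "a = 0")
  case True then show ?thesis by (simp add: refl_def)
next
  case False
  then have "a \<bullet> a \<noteq> 0" by simp
  then show ?thesis unfolding refl_def
    by (simp add: inner_diff_left inner_scaleR_left algebra_simps diff_divide_distrib)
qed

lemma refl_inner: "refl a u \<bullet> refl a v = u \<bullet> v"
proof (cases "a = 0")
  case True then show ?thesis by (simp add: refl_def)
next
  case False
  then have "a \<bullet> a \<noteq> 0" by simp
  then show ?thesis unfolding refl_def
    by (simp add: inner_diff_left inner_diff_right inner_scaleR_left inner_scaleR_right inner_commute field_simps)

qed

lemma refl_self: "a \<noteq> 0 \<Longrightarrow> refl a a = - a"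
  by (simp add: refl_def scaleR_2 )

lemma refl_orth: "v \<bullet> a = 0 \<Longrightarrow> refl a v = v"
  by (simp add: refl_def)



locale rsys =
  fixes R D :: "(real^'n::finite) set"
  assumes rs: "root_system R" and base: "is_base R D"
begin

abbreviation "W \<equiv> weyl_group R"

lemma finR: "finite R" and zR: "0 \<notin> R" and spanR: "span R = UNIV"
  and reflR: "a \<in> R \<Longrightarrow> b \<in> R \<Longrightarrow> refl a b \<in> R"
  and intR: "a \<in> R \<Longrightarrow> b \<in> R \<Longrightarrow> cp b a \<in> \<int>"
  and redR: "a \<in> R \<Longrightarrow> c *\<^sub>R a \<in> R \<Longrightarrow> c = 1 \<or> c = -1"
  using rs unfolding root_system_def cp_def by auto

lemma W_linear: "w \<in> W \<Longrightarrow> linear w"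
proof (induction rule: weyl_group.induct)
  case id then show ?case by (simp add: linear_iff)
next
  case (step w a) show ?case by (rule linear_compose[OF step.IH linear_refl])
qed

lemma W_inner: "w \<in> W \<Longrightarrow> w u \<bullet> w v = u \<bullet> v"
  by (induction arbitrary: u v rule: weyl_group.induct) (auto simp: refl_inner)

lemma W_R: "w \<in> W \<Longrightarrow> b \<in> R \<Longrightarrow> w b \<in> R"
  by (induction rule: weyl_group.induct) (auto intro: reflR)

lemma W_comp: "w \<in> W \<Longrightarrow> w' \<in> W \<Longrightarrow> w \<circ> w' \<in> W"
  by (induction rule: weyl_group.induct) (auto simp: o_assoc[symmetric] intro: weyl_group.step)

lemma refl_W: "a \<in> R \<Longrightarrow> refl a \<in> W"
  using weyl_group.step[OF weyl_group.id] by simp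

lemma W_inv_ex: "w \<in> W \<Longrightarrow> \<exists>w'\<in>W. w' \<circ> w = id \<and> w \<circ> w' = id"
proof (induction rule: weyl_group.induct)
  case id then show ?case by (metis comp_id weyl_group.id)
next
  case (step w a)
  then obtain w' where w': "w' \<in> W" "w' \<circ> w = id" "w \<circ> w' = id" by blast
  have "w' \<circ> refl a \<in> W" using W_comp[OF w'(1) refl_W[OF step(2)]] .
  moreover have "(w' \<circ> refl a) \<circ> (refl a \<circ> w) = id"
    using w' by (auto simp: fun_eq_iff pointfree_idE)
  moreover have "(refl a \<circ> w) \<circ> (w' \<circ> refl a) = id"
    using w' by (auto simp: fun_eq_iff pointfree_idE)
  ultimately show ?case by blast
qed

lemma W_bij: "w \<in> W \<Longrightarrow> bij w"
  using W_inv_ex by (metis o_bij)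

lemma W_inv: "w \<in> W \<Longrightarrow> inv w \<in> W"
proof -
  assume w: "w \<in> W"
  then obtain w' where "w' \<in> W" "w' \<circ> w = id" "w \<circ> w' = id" using W_inv_ex by blast
  moreover then have "inv w = w'" by (metis inv_unique_comp)
  ultimately show ?thesis by simp
qed

lemma W_inv_apply[simp]: "w \<in> W \<Longrightarrow> w (inv w v) = v"
  using W_bij bij_inv_eq_iff by metis
lemma W_apply_inv[simp]: "w \<in> W \<Longrightarrow> inv w (w v) = v"
  using W_bij bij_inv_eq_iff by metis
lemma W_inj: "w \<in> W \<Longrightarrow> w u = w v \<longleftrightarrow> u = v"
  using W_bij bij_is_inj inj_eq by metis

lemma W_add: "w \<in> W \<Longrightarrow> w (u + v) = w u + w v"
  using W_linear linear_add by blast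
lemma W_diff: "w \<in> W \<Longrightarrow> w (u - v) = w u - w v"
  using W_linear linear_diff by blast
lemma W_scale: "w \<in> W \<Longrightarrow> w (c *\<^sub>R v) = c *\<^sub>R w v"
  using W_linear linear_scale by blast
lemma W_neg: "w \<in> W \<Longrightarrow> w (- v) = - w v"
  using W_linear linear_neg by blast
lemma W_zero: "w \<in> W \<Longrightarrow> w 0 = 0"
  using W_linear linear_0 by blast
lemma W_sum: "w \<in> W \<Longrightarrow> w (sum f S) = (\<Sum>x\<in>S. w (f x))"
  using W_linear linear_sum by blast

lemma W_cp: "w \<in> W \<Longrightarrow> cp (w u) (w v) = cp u v"
  by (simp add: cp_def W_inner)

lemma W_inner_inv: "w \<in> W \<Longrightarrow> w u \<bullet> v = u \<bullet> inv w v"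
  by (metis W_inner W_inv_apply)

lemma W_finite: "finite W"
proof -
  have "inj_on (\<lambda>w. restrict w R) W"
  proof (rule inj_onI)
    fix w w' assume ww: "w \<in> W" "w' \<in> W" "restrict w R = restrict w' R"
    have "w x = w' x" for x
      by (rule linear_eq_on_span[OF W_linear[OF ww(1)] W_linear[OF ww(2)], of R])
         (use ww(3) spanR in \<open>auto dest: fun_cong[of _ _ x] simp: restrict_def split: if_splits\<close>, metis)
    then show "w = w'" by auto
  qed
  moreover have "(\<lambda>w. restrict w R) ` W \<subseteq> PiE R (\<lambda>_. R)"
    using W_R by auto
  moreover have "finite (PiE R (\<lambda>_. R))" using finR by (simp add: finite_PiE)
  ultimately show ?thesis using finite_imageD finite_subset by metis
qed

lemma refl_conj: "w \<in> W \<Longrightarrow> refl (w a) (w v) = w (refl a v)"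
  by (simp add: refl_cp W_cp W_diff W_scale)

end


lemma refl_conj_orth: "orthogonal_transformation g \<Longrightarrow> refl (g a) (g v) = g (refl a v)"
  unfolding refl_def orthogonal_transformation_def
  by (simp add: linear_diff linear_scale)

lemma det_refl_axis:
  assumes "c \<noteq> 0"
  shows "det (matrix (refl (axis k c) :: real^'n::finite \<Rightarrow> real^'n)) = -1"
proof -
  define A where "A = matrix (refl (axis k c) :: real^'n \<Rightarrow> real^'n)"
  have ent: "A $ i $ j = (if i = j then (if i = k then -1 else 1) else 0)" for i j
  proof -
    have e1: "axis j 1 \<bullet> axis k c = (if j = k then c else 0)" by (simp add: inner_axis_axis)
    have e2: "axis k c \<bullet> axis k c = c * c" by (simp add: inner_axis_axis)
    show ?thesis using assms unfolding A_def
      by (simp only: matrix_def vec_lambda_beta refl_def e1 e2 vector_minus_component vector_scaleR_component)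
         (auto simp: axis_def)
  qed
  have "det A = prod (\<lambda>i. A $ i $ i) UNIV"
    by (rule det_diagonal) (simp only: ent, simp)
  also have "\<dots> = prod (\<lambda>i. if i = k then -1 else 1) (UNIV :: 'n set)"
    by (rule prod.cong) (simp_all only: ent, simp)
  also have "\<dots> = -1"
    by (subst prod.delta) auto
  finally show ?thesis unfolding A_def .
qed

lemma det_refl:
  assumes "(a :: real^'n::finite) \<noteq> 0"
  shows "det (matrix (refl a)) = -1"
proof -
  obtain k :: 'n where True by simp
  let ?e = "axis k (norm a) :: real^'n"
  have "norm ?e = norm a" by (simp add: norm_eq_sqrt_inner inner_axis_axis)
  then obtain g where g: "orthogonal_transformation g" "g ?e = a"
    by (metis orthogonal_transformation_exists)
  have eq: "refl a \<circ> g = g \<circ> refl ?e"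
    using refl_conj_orth[OF g(1), of ?e] g(2) by (auto simp: fun_eq_iff)
  have lg: "linear g" using g(1) by (simp add: orthogonal_transformation_def)
  have "det (matrix (refl a \<circ> g)) = det (matrix (refl a)) * det (matrix g)"
    by (simp add: matrix_compose[OF lg linear_refl] det_mul)
  moreover have "det (matrix (g \<circ> refl ?e)) = det (matrix g) * det (matrix (refl ?e))"
    by (simp add: matrix_compose[OF linear_refl lg] det_mul)
  moreover have "det (matrix g) \<noteq> 0" using orthogonal_transformation_det[OF g(1)] by auto
  moreover have "det (matrix (refl ?e)) = -1" using assms by (intro det_refl_axis) simp
  ultimately have "(det (matrix (refl a)) + 1) * det (matrix g) = 0" and "det (matrix g) \<noteq> 0"
    using eq by (auto simp: algebra_simps)
  then show ?thesis by (simp add: add_eq_0_iff)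
qed

context rsys begin

lemma W_orth: "w \<in> W \<Longrightarrow> orthogonal_transformation w"
  by (simp add: orthogonal_transformation_def W_linear W_inner)

lemma W_det: "w \<in> W \<Longrightarrow> det (matrix w) = 1 \<or> det (matrix w) = -1"
proof -
  assume "w \<in> W"
  then have "\<bar>det (matrix w)\<bar> = 1" using orthogonal_transformation_det[OF W_orth] by blast
  then show ?thesis by (cases "det (matrix w) \<ge> 0") auto
qed

lemma wsgn_cases: "wsgn w = 1 \<or> wsgn w = -1"
  by (simp add: wsgn_def)

lemma wsgn_sq[simp]: "wsgn w * wsgn w = 1"
  by (simp add: wsgn_def)

lemma wsgn_mult: "w \<in> W \<Longrightarrow> w' \<in> W \<Longrightarrow> wsgn (w \<circ> w') = wsgn w * wsgn w'"
proof -
  assume w: "w \<in> W" "w' \<in> W"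
  have "det (matrix (w \<circ> w')) = det (matrix w) * det (matrix w')"
    by (simp add: matrix_compose[OF W_linear[OF w(2)] W_linear[OF w(1)]] det_mul)
  then show ?thesis using W_det[OF w(1)] W_det[OF w(2)]
    by (auto simp: wsgn_def)
qed

lemma wsgn_id[simp]: "wsgn id = 1"
  by (simp add: wsgn_def)

lemma wsgn_refl: "a \<noteq> 0 \<Longrightarrow> wsgn (refl a) = -1"
  by (simp add: wsgn_def det_refl)

lemma wsgn_inv: "w \<in> W \<Longrightarrow> wsgn (inv w) = wsgn w"
proof -
  assume w: "w \<in> W"
  have "w \<circ> inv w = id" using w by (auto simp: fun_eq_iff)
  then have "wsgn w * wsgn (inv w) = 1" using wsgn_mult[OF w W_inv[OF w]] by simp
  then show ?thesis using wsgn_cases[of w] wsgn_cases[of "inv w"] by auto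
qed

end


context rsys begin

abbreviation "Rp \<equiv> pos_roots R D"

definition coef :: "real^'n \<Rightarrow> real^'n \<Rightarrow> real" where
  "coef a v = representation D v a"

lemma DR: "D \<subseteq> R" and indD: "independent D"
  and Dexp: "\<And>b. b \<in> R \<Longrightarrow> \<exists>c::real^'n \<Rightarrow> int. b = (\<Sum>a\<in>D. of_int (c a) *\<^sub>R a) \<and>
        ((\<forall>a\<in>D. c a \<ge> 0) \<or> (\<forall>a\<in>D. c a \<le> 0))"
  using base unfolding is_base_def by auto

lemma finD: "finite D" using DR finR finite_subset by blast

lemma spanD: "span D = UNIV"
proof -
  have "R \<subseteq> span D"
  proof
    fix b assume "b \<in> R"
    then obtain c :: "real^'n \<Rightarrow> int" where "b = (\<Sum>a\<in>D. of_int (c a) *\<^sub>R a)" using Dexp by blast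
    then show "b \<in> span D" by (simp add: span_sum span_scale span_base)
  qed
  then have "span R \<subseteq> span D" by (simp add: span_minimal)
  then show ?thesis using spanR by auto
qed

lemma D0: "0 \<notin> D" using DR zR by auto

lemma coef_add: "coef a (u + v) = coef a u + coef a v"
  unfolding coef_def using real_vector.representation_add[OF indD] spanD by simp
lemma coef_scale: "coef a (c *\<^sub>R v) = c * coef a v"
  unfolding coef_def using real_vector.representation_scale[OF indD] spanD by simp
lemma coef_neg: "coef a (- v) = - coef a v"
  unfolding coef_def using real_vector.representation_neg[OF indD] spanD by simp
lemma coef_diff: "coef a (u - v) = coef a u - coef a v"
  unfolding coef_def using real_vector.representation_diff[OF indD] spanD by simp
lemma coef_sum: "coef a (sum f S) = (\<Sum>x\<in>S. coef a (f x))"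
  unfolding coef_def by (subst real_vector.representation_sum[OF indD]) (auto simp: spanD)
lemma coef_zero: "coef a 0 = 0"
  unfolding coef_def by (simp add: real_vector.representation_zero)
lemma coef_D: "b \<in> D \<Longrightarrow> coef a b = (if a = b then 1 else 0)"
  unfolding coef_def using real_vector.representation_basis[OF indD] by simp
lemma coef_out: "a \<notin> D \<Longrightarrow> coef a v = 0"
  unfolding coef_def using real_vector.representation_ne_zero by blast

lemma coef_expand: "v = (\<Sum>a\<in>D. coef a v *\<^sub>R a)"
  unfolding coef_def using real_vector.sum_representation_eq[OF indD _ finD] spanD by simp

lemma coef_comb: "a \<in> D \<Longrightarrow> coef a (\<Sum>b\<in>D. k b *\<^sub>R b) = k a"
proof -
  assume a: "a \<in> D"
  have "coef a (\<Sum>b\<in>D. k b *\<^sub>R b) = (\<Sum>b\<in>D. k b * (if a = b then 1 else 0))"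
    by (simp add: coef_sum coef_scale coef_D)
  also have "\<dots> = (\<Sum>b\<in>D. if a = b then k b else 0)" by (rule sum.cong) auto
  also have "\<dots> = k a" using a finD by (simp add: sum.delta)
  finally show ?thesis .
qed

lemma coef_eq_iff: "u = v \<longleftrightarrow> (\<forall>a\<in>D. coef a u = coef a v)"
proof
  assume h: "\<forall>a\<in>D. coef a u = coef a v"
  have "u = (\<Sum>a\<in>D. coef a u *\<^sub>R a)" by (rule coef_expand)
  also have "\<dots> = (\<Sum>a\<in>D. coef a v *\<^sub>R a)" using h by (intro sum.cong) auto
  also have "\<dots> = v" by (rule coef_expand[symmetric])
  finally show "u = v" .
qed simp

lemma coef_R: "b \<in> R \<Longrightarrow> (\<forall>a\<in>D. coef a b \<in> \<int>) \<and> ((\<forall>a\<in>D. coef a b \<ge> 0) \<or> (\<forall>a\<in>D. coef a b \<le> 0))"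
proof -
  assume "b \<in> R"
  then obtain c :: "real^'n \<Rightarrow> int" where c: "b = (\<Sum>a\<in>D. of_int (c a) *\<^sub>R a)"
    "(\<forall>a\<in>D. c a \<ge> 0) \<or> (\<forall>a\<in>D. c a \<le> 0)" using Dexp by blast
  have "\<forall>a\<in>D. coef a b = of_int (c a)" using c(1) coef_comb by simp
  then show ?thesis using c(2) by auto
qed

lemma pos_iff: "b \<in> Rp \<longleftrightarrow> b \<in> R \<and> (\<forall>a\<in>D. coef a b \<ge> 0)"
proof
  assume "b \<in> Rp"
  then obtain c :: "real^'n \<Rightarrow> int" where c: "b \<in> R" "b = (\<Sum>a\<in>D. of_int (c a) *\<^sub>R a)"
    "\<forall>a\<in>D. c a \<ge> 0" unfolding pos_roots_def by blast
  then show "b \<in> R \<and> (\<forall>a\<in>D. coef a b \<ge> 0)" using coef_comb by simp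
next
  assume b: "b \<in> R \<and> (\<forall>a\<in>D. coef a b \<ge> 0)"
  define c where "c a = floor (coef a b)" for a
  have "of_int (c a) = coef a b" if "a \<in> D" for a
  proof -
    have "coef a b \<in> \<int>" using coef_R b that by blast
    then obtain m where "coef a b = of_int m" by (auto elim: Ints_cases)
    then show ?thesis unfolding c_def by simp
  qed
  then have "b = (\<Sum>a\<in>D. of_int (c a) *\<^sub>R a)"
    using coef_eq_iff by (simp add: coef_comb)
  moreover have "\<forall>a\<in>D. c a \<ge> 0" using b unfolding c_def by auto
  ultimately show "b \<in> Rp" unfolding pos_roots_def using b by blast
qed

lemma neg_R: "b \<in> R \<Longrightarrow> - b \<in> R"
proof -
  assume b: "b \<in> R"
  then have "b \<noteq> 0" using zR by auto
  then show ?thesis using reflR[OF b b] refl_self by metis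
qed

lemma pos_or_neg: "b \<in> R \<Longrightarrow> b \<in> Rp \<or> - b \<in> Rp"
proof -
  assume b: "b \<in> R"
  show ?thesis
  proof (cases "\<forall>a\<in>D. coef a b \<ge> 0")
    case True then show ?thesis using b by (simp add: pos_iff)
  next
    case False
    then have "\<forall>a\<in>D. coef a b \<le> 0" using coef_R[OF b] by blast
    then have "- b \<in> Rp" using neg_R[OF b] by (simp add: pos_iff coef_neg)
    then show ?thesis by blast
  qed
qed

lemma pos_R: "b \<in> Rp \<Longrightarrow> b \<in> R" by (simp add: pos_iff)

lemma pos_nz: "b \<in> Rp \<Longrightarrow> \<exists>a\<in>D. coef a b > 0"
proof (rule ccontr)
  assume b: "b \<in> Rp" "\<not> (\<exists>a\<in>D. coef a b > 0)"
  then have "\<forall>a\<in>D. coef a b = 0" by (force simp: pos_iff)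
  then have "b = 0" using coef_eq_iff[of b 0] by (simp add: coef_zero)
  then show False using b zR pos_R by auto
qed

lemma not_pos_and_neg: "b \<in> Rp \<Longrightarrow> - b \<notin> Rp"
proof
  assume b: "b \<in> Rp" "- b \<in> Rp"
  obtain a where "a \<in> D" "coef a b > 0" using pos_nz b by blast
  then show False using b(2) by (auto simp: pos_iff coef_neg)
qed

lemma D_pos: "a \<in> D \<Longrightarrow> a \<in> Rp"
  using DR by (auto simp: pos_iff coef_D)

lemma finRp: "finite Rp" by (rule finite_subset[OF _ finR]) (auto simp: pos_iff)

lemma lemmaA:
  assumes al: "al \<in> D" and b: "b \<in> Rp" "b \<noteq> al"
  shows "refl al b \<in> Rp"
proof -
  have coef_r: "coef a (refl al b) = coef a b - cp b al * coef a al" for a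
    by (simp add: refl_cp coef_diff coef_scale)
  have "\<exists>a'\<in>D. a' \<noteq> al \<and> coef a' b > 0"
  proof (rule ccontr)
    assume "\<not> ?thesis"
    then have z: "\<forall>a\<in>D. a \<noteq> al \<longrightarrow> coef a b = 0" using b by (force simp: pos_iff)
    define t where "t = coef al b"
    have bt: "b = t *\<^sub>R al"
      unfolding coef_eq_iff[of b] using z al by (auto simp: coef_scale coef_D t_def)
    have "t *\<^sub>R al \<in> R" using bt b(1) pos_R by metis
    then have "t = 1 \<or> t = -1" using redR[of al t] al DR by auto
    moreover have "t \<ge> 0" using b al by (auto simp: pos_iff t_def)
    ultimately have "t = 1" by auto
    then show False using bt b(2) by simp
  qed
  then obtain a' where a': "a' \<in> D" "a' \<noteq> al" "coef a' b > 0" by blast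
  have rR: "refl al b \<in> R" using reflR al DR b pos_R by auto
  have "coef a' (refl al b) > 0" using a' al by (simp add: coef_r coef_D)
  then have "\<forall>a\<in>D. coef a (refl al b) \<ge> 0" using coef_R[OF rR] a'(1) by force
  then show ?thesis using rR by (simp add: pos_iff)
qed

lemma refl_D_neg: "a \<in> D \<Longrightarrow> refl a a \<notin> Rp"
proof -
  assume a: "a \<in> D"
  then have "a \<noteq> 0" using D0 by auto
  then have "refl a a = - a" by (rule refl_self)
  then show ?thesis using not_pos_and_neg D_pos a by metis
qed

end


primrec wd :: "(real^'n::finite) list \<Rightarrow> real^'n \<Rightarrow> real^'n" where
  "wd [] = id"
| "wd (a # l) = refl a \<circ> wd l"

lemma wd_append: "wd (l1 @ l2) = wd l1 \<circ> wd l2"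
  by (induction l1) auto

lemma wd_rev1: "wd (rev l) (wd l v) = v"
  by (induction l arbitrary: v) (auto simp: wd_append)

lemma wd_rev2: "wd l (wd (rev l) v) = v"
  by (induction l arbitrary: v) (auto simp: wd_append)

lemma refl_adj: "refl a x \<bullet> y = x \<bullet> refl a y"
  by (metis refl_inner refl_refl)

context rsys begin

abbreviation "rh \<equiv> rho R D"

lemma wd_W: "set l \<subseteq> R \<Longrightarrow> wd l \<in> W"
proof (induction l)
  case Nil then show ?case using weyl_group.id by (auto simp: id_def)
next
  case (Cons a l)
  have "wd l \<in> W" "a \<in> R" using Cons by auto
  then have "refl a \<circ> wd l \<in> W" by (rule weyl_group.step)
  then show ?case by (simp only: wd.simps)
qed

lemma wd_WD: "set l \<subseteq> D \<Longrightarrow> wd l \<in> W"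
  using wd_W DR by auto

lemma perm_simple:
  assumes a: "a \<in> D"
  shows "refl a ` (Rp - {a}) = Rp - {a}"
proof -
  have sub: "refl a b \<in> Rp - {a}" if b: "b \<in> Rp - {a}" for b
  proof -
    have "refl a b \<in> Rp" using lemmaA[OF a] b by auto
    moreover have "refl a b \<noteq> a"
    proof
      assume "refl a b = a"
      then have "b = refl a a" by (metis refl_refl)
      then show False using refl_D_neg[OF a] b by auto
    qed
    ultimately show ?thesis by auto
  qed
  show ?thesis
  proof
    show "refl a ` (Rp - {a}) \<subseteq> Rp - {a}" using sub by auto
    show "Rp - {a} \<subseteq> refl a ` (Rp - {a})"
    proof
      fix b assume "b \<in> Rp - {a}"
      then have "refl a (refl a b) = b" "refl a b \<in> Rp - {a}" using sub by auto
      then show "b \<in> refl a ` (Rp - {a})" by (metis image_eqI)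
    qed
  qed
qed

lemma rho_refl:
  assumes a: "a \<in> D"
  shows "refl a rh = rh - a"
proof -
  have aR: "a \<in> Rp" using D_pos a by auto
  have a0: "a \<noteq> 0" using a D0 by auto
  have inj: "inj_on (refl a) (Rp - {a})" by (metis inj_on_inverseI refl_refl)
  have "(\<Sum>b\<in>Rp. refl a b) = refl a a + (\<Sum>b\<in>Rp - {a}. refl a b)"
    using aR finRp by (simp add: sum.remove)
  also have "(\<Sum>b\<in>Rp - {a}. refl a b) = (\<Sum>b\<in>refl a ` (Rp - {a}). b)"
    using sum.reindex[OF inj, of id] by simp
  also have "\<dots> = (\<Sum>b\<in>Rp - {a}. b)" using perm_simple[OF a] by simp
  also have "\<dots> = (\<Sum>b\<in>Rp. b) - a" using aR finRp by (simp add: sum_diff1)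
  finally have "(\<Sum>b\<in>Rp. refl a b) = (\<Sum>b\<in>Rp. b) - 2 *\<^sub>R a"
    using refl_self[OF a0] by (simp add: scaleR_2)
  moreover have "refl a rh = (1/2) *\<^sub>R (\<Sum>b\<in>Rp. refl a b)"
    unfolding rho_def using linear_refl[of a]
    by (simp add: linear_scale linear_sum)
  ultimately have "refl a rh = (1/2) *\<^sub>R ((\<Sum>b\<in>Rp. b) - 2 *\<^sub>R a)" unfolding rho_def by simp
  then show ?thesis unfolding rho_def by (simp add: scaleR_diff_right)
qed

lemma cp_rho: "a \<in> D \<Longrightarrow> cp rh a = 1"
proof -
  assume a: "a \<in> D"
  then have a0: "a \<noteq> 0" using D0 by auto
  have "cp rh a *\<^sub>R a = 1 *\<^sub>R a" using rho_refl[OF a] by (simp add: refl_cp)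
  then show ?thesis using a0 by (metis scaleR_cancel_right)
qed

lemma rho_inner: "a \<in> D \<Longrightarrow> rh \<bullet> a = (a \<bullet> a) / 2"
proof -
  assume a: "a \<in> D"
  then have "a \<bullet> a \<noteq> 0" using D0 by auto
  then show ?thesis using cp_rho[OF a] unfolding cp_def by (simp add: field_simps)
qed

lemma rho_inner_pos: "a \<in> D \<Longrightarrow> rh \<bullet> a > 0"
proof -
  assume a: "a \<in> D"
  then have "a \<noteq> 0" using D0 by auto
  then have "a \<bullet> a > 0" by simp
  then show ?thesis using rho_inner[OF a] by linarith
qed

definition ht :: "real^'n \<Rightarrow> real" where "ht v = (\<Sum>a\<in>D. coef a v)"

lemma ht_diff: "ht (u - v) = ht u - ht v"
  by (simp add: ht_def coef_diff sum_subtractf)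
lemma ht_scale: "ht (c *\<^sub>R v) = c * ht v"
  by (simp add: ht_def coef_scale sum_distrib_left)
lemma ht_D: "a \<in> D \<Longrightarrow> ht a = 1"
  using finD by (simp add: ht_def coef_D sum.delta')
lemma ht_pos: "b \<in> Rp \<Longrightarrow> ht b \<ge> 0"
  unfolding ht_def by (rule sum_nonneg) (simp add: pos_iff)

lemma inner_expand: "v \<bullet> b = (\<Sum>a\<in>D. coef a b * (v \<bullet> a))"
proof -
  have "v \<bullet> b = v \<bullet> (\<Sum>a\<in>D. coef a b *\<^sub>R a)" using coef_expand[of b] by simp
  then show ?thesis by (simp add: inner_sum_right)
qed

lemma conj_simple_pos:
  "b \<in> Rp \<Longrightarrow> \<exists>l al. set l \<subseteq> D \<and> al \<in> D \<and> b = wd l al"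
proof (induction "nat (floor (ht b))" arbitrary: b rule: less_induct)
  case less
  show ?case
  proof (cases "b \<in> D")
    case True then show ?thesis by (intro exI[of _ "[]"]) auto
  next
    case False
    have bR: "b \<in> R" using less.prems pos_R by auto
    have "\<exists>a\<in>D. b \<bullet> a > 0"
    proof (rule ccontr)
      assume "\<not> ?thesis"
      then have "\<forall>a\<in>D. b \<bullet> a \<le> 0" by auto
      then have "b \<bullet> b \<le> 0" unfolding inner_expand[of b b]
        using less.prems by (intro sum_nonpos) (simp add: pos_iff mult_nonneg_nonpos)
      moreover have "b \<noteq> 0" using bR zR by auto
      then have "b \<bullet> b > 0" by simp
      ultimately show False by linarith
    qed
    then obtain a where a: "a \<in> D" "b \<bullet> a > 0" by blast
    have aR: "a \<in> R" using a DR by auto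
    have cpz: "cp b a \<in> \<int>" using intR[OF aR bR] .
    have "a \<bullet> a > 0" using aR zR by auto
    then have "cp b a > 0" using a unfolding cp_def by simp
    moreover obtain m where m: "cp b a = of_int m" using cpz by (auto elim: Ints_cases)
    ultimately have c1: "cp b a \<ge> 1" by simp
    have b': "refl a b \<in> Rp" using lemmaA[OF a(1) less.prems] False a(1) by auto
    have "ht (refl a b) = ht b - cp b a"
      using ht_D[OF a(1)] by (simp add: refl_cp ht_diff ht_scale)
    then have "ht (refl a b) \<le> ht b - 1" using c1 by simp
    moreover have "ht (refl a b) \<ge> 0" using ht_pos[OF b'] .
    ultimately have f1: "floor (ht (refl a b)) \<le> floor (ht b) - 1" "floor (ht (refl a b)) \<ge> 0"
      using floor_mono[of "ht (refl a b)" "ht b - 1"] by auto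
    then have "nat (floor (ht (refl a b))) < nat (floor (ht b))" by linarith
    then obtain l al where l: "set l \<subseteq> D" "al \<in> D" "refl a b = wd l al"
      using less.hyps[OF _ b'] by blast
    then have "refl a (refl a b) = refl a (wd l al)" by simp
    then have "b = wd (a # l) al" by simp
    then show ?thesis using l a by (intro exI[of _ "a # l"] exI[of _ al]) auto
  qed
qed

lemma conj_simple:
  assumes b: "b \<in> R" shows "\<exists>l al. set l \<subseteq> D \<and> al \<in> D \<and> b = wd l al"
proof (cases "b \<in> Rp")
  case True then show ?thesis using conj_simple_pos by blast
next
  case False
  then have "- b \<in> Rp" using pos_or_neg b by blast
  then obtain l al where l: "set l \<subseteq> D" "al \<in> D" "- b = wd l al" using conj_simple_pos by blast
  have "al \<noteq> 0" using l D0 by auto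
  then have "wd (l @ [al]) al = wd l (- al)" by (simp add: wd_append refl_self)
  also have "\<dots> = - wd l al" using W_neg[OF wd_WD[OF l(1)]] by simp
  also have "\<dots> = b" using l(3) by (metis minus_minus)
  finally show ?thesis using l by (intro exI[of _ "l @ [al]"] exI[of _ al]) auto
qed

lemma refl_word: "b \<in> R \<Longrightarrow> \<exists>l. set l \<subseteq> D \<and> refl b = wd l"
proof -
  assume "b \<in> R"
  then obtain l al where l: "set l \<subseteq> D" "al \<in> D" "b = wd l al" using conj_simple by blast
  have u: "wd l \<in> W" using wd_WD[OF l(1)] .
  have "refl b x = wd (l @ al # rev l) x" for x
  proof -
    have "refl b x = refl (wd l al) (wd l (wd (rev l) x))" using l(3) wd_rev2 by metis
    also have "\<dots> = wd l (refl al (wd (rev l) x))" using refl_conj[OF u] by simp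
    finally show ?thesis by (simp add: wd_append)
  qed
  then show ?thesis using l by (intro exI[of _ "l @ al # rev l"]) auto
qed

lemma W_word: "w \<in> W \<Longrightarrow> \<exists>l. set l \<subseteq> D \<and> w = wd l"
proof (induction rule: weyl_group.induct)
  case id then show ?case by (intro exI[of _ "[]"]) auto
next
  case (step w a)
  then obtain l where l: "set l \<subseteq> D" "w = wd l" by blast
  obtain la where la: "set la \<subseteq> D" "refl a = wd la" using refl_word step by blast
  show ?case using l la by (intro exI[of _ "la @ l"]) (simp add: wd_append)
qed

lemma lemmaC:
  assumes "set xs \<subseteq> D" "t \<in> D" "- wd xs t \<in> Rp"
  shows "\<exists>ys. set ys \<subseteq> D \<and> length ys < length xs + 1 \<and> wd ys = wd (xs @ [t])"
  using assms
proof (induction xs)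
  case Nil
  then show ?case using not_pos_and_neg D_pos by auto
next
  case (Cons a xs)
  have a: "a \<in> D" and xs: "set xs \<subseteq> D" using Cons.prems by auto
  let ?b = "wd xs t"
  have bR: "?b \<in> R" using W_R[OF wd_WD[OF xs]] Cons.prems DR by auto
  show ?case
  proof (cases "- ?b \<in> Rp")
    case True
    then obtain ys where ys: "set ys \<subseteq> D" "length ys < length xs + 1" "wd ys = wd (xs @ [t])"
      using Cons.IH xs Cons.prems by blast
    then show ?thesis using a by (intro exI[of _ "a # ys"]) auto
  next
    case False
    then have bp: "?b \<in> Rp" using pos_or_neg bR by blast
    have neg: "- refl a ?b \<in> Rp" using Cons.prems by simp
    have "?b = a"
    proof (rule ccontr)
      assume "?b \<noteq> a"
      then have "refl a ?b \<in> Rp" using lemmaA[OF a bp] by auto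
      then show False using neg not_pos_and_neg by auto
    qed
    have u: "wd xs \<in> W" using wd_WD[OF xs] .
    have "wd (a # xs @ [t]) v = wd xs v" for v
    proof -
      have "wd (a # xs @ [t]) v = refl (wd xs t) (wd xs (refl t v))"
        using \<open>?b = a\<close> by (simp add: wd_append)
      also have "\<dots> = wd xs v" using refl_conj[OF u] by simp
      finally show ?thesis .
    qed
    then show ?thesis using xs by (intro exI[of _ xs]) auto
  qed
qed

definition minimal :: "(real^'n) list \<Rightarrow> bool" where
  "minimal l \<longleftrightarrow> set l \<subseteq> D \<and> (\<forall>l'. set l' \<subseteq> D \<and> wd l' = wd l \<longrightarrow> length l \<le> length l')"

lemma minimal_exists: "w \<in> W \<Longrightarrow> \<exists>l. minimal l \<and> wd l = w"
proof -
  assume "w \<in> W"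
  then obtain l0 where "set l0 \<subseteq> D \<and> wd l0 = w" using W_word by metis
  then obtain l where l: "set l \<subseteq> D \<and> wd l = w"
    "\<forall>y. set y \<subseteq> D \<and> wd y = w \<longrightarrow> length l \<le> length y"
    using ex_has_least_nat[of "\<lambda>l. set l \<subseteq> D \<and> wd l = w" l0 length] by blast
  then show ?thesis unfolding minimal_def by metis
qed

lemma minimal_last:
  assumes m: "minimal (xs @ [t])"
  shows "wd xs t \<in> Rp"
proof (rule ccontr)
  assume nb: "wd xs t \<notin> Rp"
  have xs: "set xs \<subseteq> D" and t: "t \<in> D" using m unfolding minimal_def by auto
  have "wd xs t \<in> R" using W_R[OF wd_WD[OF xs]] t DR by auto
  then have "- wd xs t \<in> Rp" using nb pos_or_neg by blast
  then obtain ys where "set ys \<subseteq> D" "length ys < length xs + 1" "wd ys = wd (xs @ [t])"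
    using lemmaC[OF xs t] by blast
  then show False using m unfolding minimal_def by fastforce
qed

lemma minimal_tl: "minimal (a # l) \<Longrightarrow> minimal l"
proof -
  assume m: "minimal (a # l)"
  have "length l \<le> length l'" if l': "set l' \<subseteq> D" "wd l' = wd l" for l'
  proof -
    have "set (a # l') \<subseteq> D" "wd (a # l') = wd (a # l)" using l' m unfolding minimal_def by auto
    then have "length (a # l) \<le> length (a # l')" using m unfolding minimal_def by blast
    then show ?thesis by simp
  qed
  then show ?thesis using m unfolding minimal_def by auto
qed

lemma wd_inv_unique: "wd l' = wd (rev l) \<Longrightarrow> wd (rev l') = wd l"
proof
  fix x assume h: "wd l' = wd (rev l)"
  have "wd l' (wd l x) = x" using h wd_rev1[of l x] by simp
  then have "wd (rev l') x = wd (rev l') (wd l' (wd l x))" by simp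
  also have "\<dots> = wd l x" by (rule wd_rev1)
  finally show "wd (rev l') x = wd l x" .
qed

lemma minimal_rev: "minimal l \<Longrightarrow> minimal (rev l)"
proof -
  assume m: "minimal l"
  have "length (rev l) \<le> length l'" if l': "set l' \<subseteq> D" "wd l' = wd (rev l)" for l'
  proof -
    have "set (rev l') \<subseteq> D" "wd (rev l') = wd l" using l' wd_inv_unique by auto
    then have "length l \<le> length (rev l')" using m unfolding minimal_def by blast
    then show ?thesis by simp
  qed
  then show ?thesis using m unfolding minimal_def by auto
qed

lemma noinv:
  assumes w: "w \<in> W" and p: "\<forall>b\<in>Rp. w b \<in> Rp"
  shows "w = id"
proof -
  obtain l where l: "minimal l" "wd l = w" using minimal_exists[OF w] by blast
  show ?thesis
  proof (cases l rule: rev_exhaust)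
    case Nil then show ?thesis using l by simp
  next
    case (snoc xs t)
    have pos: "wd xs t \<in> Rp" using minimal_last l snoc by simp
    have xs: "set xs \<subseteq> D" and t: "t \<in> D" using l snoc unfolding minimal_def by auto
    have "t \<noteq> 0" using t D0 by auto
    have "w t = wd xs (refl t t)" using l(2)[symmetric] snoc by (simp add: wd_append)
    also have "\<dots> = wd xs (- t)" using \<open>t \<noteq> 0\<close> by (simp add: refl_self)
    also have "\<dots> = - wd xs t" using W_neg[OF wd_WD[OF xs]] by simp
    finally have "w t = - wd xs t" .
    moreover have "w t \<in> Rp" using p D_pos t by auto
    ultimately show ?thesis using pos not_pos_and_neg by auto
  qed
qed

definition sdom :: "real^'n \<Rightarrow> bool" where "sdom v \<longleftrightarrow> (\<forall>a\<in>D. v \<bullet> a > 0)"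
definition dom :: "real^'n \<Rightarrow> bool" where "dom v \<longleftrightarrow> (\<forall>a\<in>D. v \<bullet> a \<ge> 0)"

lemma dom_pos: "dom v \<Longrightarrow> b \<in> Rp \<Longrightarrow> v \<bullet> b \<ge> 0"
  unfolding inner_expand[of v b] dom_def by (intro sum_nonneg) (simp add: pos_iff)

lemma sdom_pos: "sdom v \<Longrightarrow> b \<in> Rp \<Longrightarrow> v \<bullet> b > 0"
proof -
  assume s: "sdom v" and b: "b \<in> Rp"
  obtain a where a: "a \<in> D" "coef a b > 0" using pos_nz b by blast
  have "(\<Sum>a\<in>D. coef a b * (v \<bullet> a)) > 0"
  proof (rule sum_pos2[OF finD a(1)])
    show "0 < coef a b * (v \<bullet> a)" using a s unfolding sdom_def by simp
    show "\<And>i. i \<in> D \<Longrightarrow> 0 \<le> coef i b * (v \<bullet> i)" using s b unfolding sdom_def pos_iff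
      by (meson less_imp_le mult_nonneg_nonneg)
  qed
  then show ?thesis using inner_expand[of v b] by simp
qed

lemma sdom_dom: "sdom v \<Longrightarrow> dom v"
  unfolding sdom_def dom_def by force

lemma sdom_rho: "sdom rh"
  unfolding sdom_def using rho_inner_pos by auto

lemma stab:
  assumes w: "w \<in> W" and s: "sdom v" "sdom (w v)"
  shows "w = id"
proof -
  have "\<forall>b\<in>Rp. inv w b \<in> Rp"
  proof
    fix b assume b: "b \<in> Rp"
    have gR: "inv w b \<in> R" using W_R[OF W_inv[OF w]] b pos_R by auto
    show "inv w b \<in> Rp"
    proof (rule ccontr)
      assume "inv w b \<notin> Rp"
      then have "- inv w b \<in> Rp" using gR pos_or_neg by blast
      then have "v \<bullet> (- inv w b) > 0" using sdom_pos s(1) by blast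
      moreover have "w v \<bullet> b > 0" using sdom_pos s(2) b by blast
      ultimately show False using W_inner_inv[OF w] by simp
    qed
  qed
  then have "inv w = id" using noinv[OF W_inv[OF w]] by blast
  show ?thesis
  proof
    fix x
    have "w x = w (inv w x)" using \<open>inv w = id\<close> by simp
    also have "\<dots> = x" using w by simp
    finally show "w x = id x" by simp
  qed
qed

end


lemma cp_diff: "cp (u - v) a = cp u a - cp v a"
  by (simp add: cp_def inner_diff_left diff_divide_distrib)
lemma cp_add: "cp (u + v) a = cp u a + cp v a"
  by (simp add: cp_def inner_add_left add_divide_distrib)
lemma cp_scale: "cp (c *\<^sub>R v) a = c * cp v a"
  by (simp add: cp_def)
lemma cp_sum: "cp (sum f S) a = (\<Sum>x\<in>S. cp (f x) a)"
  by (simp add: cp_def inner_sum_left sum_divide_distrib sum_distrib_left)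

context rsys begin

definition intq :: "real^'n \<Rightarrow> bool" where "intq v \<longleftrightarrow> (\<forall>a\<in>D. coef a v \<in> \<int>)"
definition qplus :: "real^'n \<Rightarrow> bool" where "qplus v \<longleftrightarrow> intq v \<and> (\<forall>a\<in>D. coef a v \<ge> 0)"
definition wl :: "real^'n \<Rightarrow> bool" where "wl v \<longleftrightarrow> (\<forall>b\<in>R. cp v b \<in> \<int>)"

lemma wl_iff: "wl v \<longleftrightarrow> v \<in> weight_lattice R"
  by (simp add: wl_def weight_lattice_def cp_def)

lemma intq_add: "intq u \<Longrightarrow> intq v \<Longrightarrow> intq (u + v)"
  by (simp add: intq_def coef_add)
lemma intq_diff: "intq u \<Longrightarrow> intq v \<Longrightarrow> intq (u - v)"
  by (simp add: intq_def coef_diff)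
lemma intq_neg: "intq u \<Longrightarrow> intq (- u)"
  by (simp add: intq_def coef_neg)
lemma intq_zero: "intq 0" by (simp add: intq_def coef_zero)
lemma intq_R: "b \<in> R \<Longrightarrow> intq b" using coef_R by (simp add: intq_def)
lemma intq_smult: "intq u \<Longrightarrow> c \<in> \<int> \<Longrightarrow> intq (c *\<^sub>R u)"
  by (simp add: intq_def coef_scale)

lemma qplus_add: "qplus u \<Longrightarrow> qplus v \<Longrightarrow> qplus (u + v)"
  by (simp add: qplus_def intq_add coef_add)
lemma qplus_zero: "qplus 0" by (simp add: qplus_def intq_zero coef_zero)
lemma qplus_pos: "b \<in> Rp \<Longrightarrow> qplus b" by (simp add: qplus_def intq_R pos_iff)

lemma qplus_ht: "qplus v \<Longrightarrow> ht v \<ge> 0"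
  unfolding ht_def qplus_def by (rule sum_nonneg) simp

lemma qplus_ht0: "qplus v \<Longrightarrow> ht v = 0 \<Longrightarrow> v = 0"
proof -
  assume q: "qplus v" and h: "ht v = 0"
  have "\<forall>a\<in>D. coef a v = 0"
    using h q unfolding ht_def qplus_def by (simp add: sum_nonneg_eq_0_iff[OF finD])
  then show "v = 0" using coef_eq_iff[of v 0] by (simp add: coef_zero)
qed

lemma qplus_antisym: "qplus u \<Longrightarrow> qplus v \<Longrightarrow> u + v = 0 \<Longrightarrow> u = 0"
proof -
  assume q: "qplus u" "qplus v" and s: "u + v = 0"
  then have "v = - u" by (metis add_eq_0_iff)
  then have "ht v = - ht u" using ht_scale[of "-1" u] by simp
  then have "ht u = 0" using qplus_ht[OF q(1)] qplus_ht[OF q(2)] by simp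
  then show "u = 0" using qplus_ht0 q(1) by blast
qed

lemma qplus_ht1: "qplus v \<Longrightarrow> v \<noteq> 0 \<Longrightarrow> ht v \<ge> 1"
proof -
  assume q: "qplus v" and v: "v \<noteq> 0"
  then obtain a where a: "a \<in> D" "coef a v \<noteq> 0" using coef_eq_iff[of v 0] by (auto simp: coef_zero)
  have "coef a v \<in> \<int>" using q a unfolding qplus_def intq_def by auto
  then obtain m where m: "coef a v = of_int m" by (auto elim: Ints_cases)
  have "coef a v \<ge> 0" using q a unfolding qplus_def by auto
  then have "coef a v \<ge> 1" using m a(2) by simp
  moreover have "(\<Sum>b\<in>D - {a}. coef b v) \<ge> 0" using q unfolding qplus_def by (intro sum_nonneg) auto
  moreover have "ht v = coef a v + (\<Sum>b\<in>D - {a}. coef b v)" unfolding ht_def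
    using a(1) finD by (simp add: sum.remove)
  ultimately show ?thesis by linarith
qed

lemma cp_expand: "cp v b = (\<Sum>a\<in>D. coef a v * cp a b)"
proof -
  have "cp v b = cp (\<Sum>a\<in>D. coef a v *\<^sub>R a) b" using coef_expand[of v] by simp
  then show ?thesis by (simp add: cp_sum cp_scale)
qed

lemma intq_cp: "intq v \<Longrightarrow> b \<in> R \<Longrightarrow> cp v b \<in> \<int>"
  unfolding cp_expand[of v b] intq_def using DR intR by (intro Ints_sum Ints_mult) auto

lemma intq_root_lattice: "intq v \<longleftrightarrow> v \<in> root_lattice R"
proof
  assume q: "intq v"
  define c where "c a = (if a \<in> D then floor (coef a v) else 0)" for a
  have ca: "of_int (c a) = (if a \<in> D then coef a v else 0)" for a
    using q unfolding c_def intq_def by (auto elim: Ints_cases)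
  have "v = (\<Sum>a\<in>D. coef a v *\<^sub>R a)" by (rule coef_expand)
  also have "\<dots> = (\<Sum>a\<in>R. (if a \<in> D then coef a v else 0) *\<^sub>R a)"
    using DR finR by (intro sum.mono_neutral_cong_left) auto
  also have "\<dots> = (\<Sum>a\<in>R. of_int (c a) *\<^sub>R a)" by (simp add: ca)
  finally show "v \<in> root_lattice R" unfolding root_lattice_def by blast
next
  assume "v \<in> root_lattice R"
  then obtain c :: "real^'n \<Rightarrow> int" where v: "v = (\<Sum>a\<in>R. of_int (c a) *\<^sub>R a)"
    unfolding root_lattice_def by blast
  show "intq v" unfolding intq_def v
    using coef_R by (auto simp: coef_sum coef_scale intro!: Ints_sum Ints_mult)
qed

lemma wl_W: "wl v \<Longrightarrow> w \<in> W \<Longrightarrow> wl (w v)"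
proof -
  assume v: "wl v" and w: "w \<in> W"
  show "wl (w v)" unfolding wl_def
  proof
    fix b assume b: "b \<in> R"
    have "cp (w v) b = cp (inv w (w v)) (inv w b)" using W_cp[OF W_inv[OF w]] by simp
    also have "\<dots> = cp v (inv w b)" using w by simp
    finally show "cp (w v) b \<in> \<int>" using v W_R[OF W_inv[OF w] b] unfolding wl_def by simp
  qed
qed

lemma wl_diff_word: "wl v \<Longrightarrow> set l \<subseteq> D \<Longrightarrow> intq (v - wd l v)"
proof (induction l)
  case Nil then show ?case by (simp add: intq_zero)
next
  case (Cons a l)
  let ?u = "wd l"
  have a: "a \<in> D" and l: "set l \<subseteq> D" using Cons.prems by auto
  have eq: "v - wd (a # l) v = (v - ?u v) + cp (?u v) a *\<^sub>R a" by (simp add: refl_cp)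
  have "cp (?u v) a = cp (wd (rev l) (?u v)) (wd (rev l) a)"
    using W_cp[OF wd_WD[of "rev l"]] l by simp
  also have "\<dots> = cp v (wd (rev l) a)" by (simp add: wd_rev1)
  finally have "cp (?u v) a \<in> \<int>"
    using Cons.prems(1) W_R[OF wd_WD[of "rev l"]] l a DR unfolding wl_def by auto
  then have "intq (cp (?u v) a *\<^sub>R a)" using intq_smult[OF intq_R] a DR by auto
  moreover have "intq (v - ?u v)" using Cons l by auto
  ultimately show ?case unfolding eq by (rule intq_add[rotated])
qed

lemma wl_diff: "wl v \<Longrightarrow> w \<in> W \<Longrightarrow> intq (v - w v)"
  using W_word wl_diff_word by metis

lemma intq_wl: "intq v \<Longrightarrow> wl v"
  using intq_cp wl_def by auto

lemma rho_diff_word: "set l \<subseteq> D \<Longrightarrow> intq (rh - wd l rh)"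
proof (induction l)
  case Nil then show ?case by (simp add: intq_zero)
next
  case (Cons a l)
  let ?u = "wd l"
  have a: "a \<in> D" and l: "set l \<subseteq> D" using Cons.prems by auto
  have eq: "rh - wd (a # l) rh = (rh - ?u rh) + cp (?u rh) a *\<^sub>R a" by (simp add: refl_cp)
  have "cp (?u rh) a = cp rh a - cp (rh - ?u rh) a" by (simp add: cp_diff)
  also have "\<dots> = 1 - cp (rh - ?u rh) a" using cp_rho[OF a] by simp
  finally have "cp (?u rh) a \<in> \<int>" using intq_cp[OF Cons.IH[OF l]] a DR by auto
  then have "intq (cp (?u rh) a *\<^sub>R a)" using intq_smult[OF intq_R] a DR by auto
  moreover have "intq (rh - ?u rh)" using Cons l by auto
  ultimately show ?case unfolding eq by (rule intq_add[rotated])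
qed

lemma rho_wl: "wl rh"
  unfolding wl_def
proof
  fix b assume b: "b \<in> R"
  then obtain l al where l: "set l \<subseteq> D" "al \<in> D" "b = wd l al" using conj_simple by blast
  have "cp rh b = cp (wd (rev l) rh) (wd (rev l) b)"
    using W_cp[OF wd_WD[of "rev l"]] l by simp
  also have "\<dots> = cp (wd (rev l) rh) al" using l(3) by (simp add: wd_rev1)
  also have "\<dots> = cp rh al - cp (rh - wd (rev l) rh) al" by (simp add: cp_diff)
  also have "\<dots> = 1 - cp (rh - wd (rev l) rh) al" using cp_rho[OF l(2)] by simp
  finally show "cp rh b \<in> \<int>"
    using intq_cp[OF rho_diff_word[of "rev l"]] l DR by auto
qed

lemma dom_diff_word: "wl v \<Longrightarrow> dom v \<Longrightarrow> minimal l \<Longrightarrow> qplus (v - wd l v)"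
proof (induction l)
  case Nil then show ?case by (simp add: qplus_zero)
next
  case (Cons a l)
  let ?u = "wd l"
  have m: "minimal l" using minimal_tl Cons.prems by blast
  have a: "a \<in> D" and l: "set l \<subseteq> D" using Cons.prems unfolding minimal_def by auto
  have "minimal (rev l @ [a])" using minimal_rev[OF Cons.prems(3)] by simp
  then have g: "wd (rev l) a \<in> Rp" by (rule minimal_last)
  have eq: "v - wd (a # l) v = (v - ?u v) + cp (?u v) a *\<^sub>R a" by (simp add: refl_cp)
  have "cp (?u v) a = cp (wd (rev l) (?u v)) (wd (rev l) a)"
    using W_cp[OF wd_WD[of "rev l"]] l by simp
  also have "\<dots> = cp v (wd (rev l) a)" by (simp add: wd_rev1)
  finally have c: "cp (?u v) a = cp v (wd (rev l) a)" .
  have ci: "cp (?u v) a \<in> \<int>" using c Cons.prems(1) g pos_R unfolding wl_def by auto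
  have "v \<bullet> wd (rev l) a \<ge> 0" using dom_pos[OF Cons.prems(2) g] .
  moreover have "wd (rev l) a \<bullet> wd (rev l) a > 0" using g pos_R zR by (metis inner_gt_zero_iff)
  ultimately have "cp v (wd (rev l) a) \<ge> 0" unfolding cp_def by simp
  then have cn: "cp (?u v) a \<ge> 0" using c by simp
  have "qplus (cp (?u v) a *\<^sub>R a)" unfolding qplus_def
    using ci cn a intq_R DR by (auto simp: intq_smult coef_scale coef_D)
  then show ?case unfolding eq using Cons.IH[OF Cons.prems(1,2) m] by (rule qplus_add[rotated])
qed

lemma dom_diff: "wl v \<Longrightarrow> dom v \<Longrightarrow> w \<in> W \<Longrightarrow> qplus (v - w v)"
  using minimal_exists dom_diff_word by metis

lemma dom_conj: "\<exists>w\<in>W. dom (w v)"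
proof -
  let ?f = "\<lambda>w. w v \<bullet> rh"
  have ne: "?f ` W \<noteq> {}" using weyl_group.id by blast
  have fin: "finite (?f ` W)" using W_finite by simp
  obtain w where w: "w \<in> W" "?f w = Max (?f ` W)" using Max_in[OF fin ne] by auto
  have "dom (w v)" unfolding dom_def
  proof
    fix a assume a: "a \<in> D"
    show "w v \<bullet> a \<ge> 0"
    proof (rule ccontr)
      assume "\<not> ?thesis"
      then have neg: "w v \<bullet> a < 0" by simp
      have rw: "refl a \<circ> w \<in> W" using weyl_group.step[OF w(1)] a DR by auto
      have "?f (refl a \<circ> w) = w v \<bullet> refl a rh" by (simp add: refl_adj)
      also have "\<dots> = ?f w - w v \<bullet> a" using rho_refl[OF a] by (simp add: inner_diff_right)
      finally have "?f (refl a \<circ> w) > ?f w" using neg by simp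
      moreover have "?f (refl a \<circ> w) \<in> ?f ` W" using rw by (rule imageI)
      then have "?f (refl a \<circ> w) \<le> Max (?f ` W)" using Max_ge[OF fin] by blast
      then have "?f (refl a \<circ> w) \<le> ?f w" using w(2) by simp
      ultimately show False by simp
    qed
  qed
  then show ?thesis using w by blast
qed

lemma dom_sdom_reg: "w \<in> W \<Longrightarrow> dom (w v) \<Longrightarrow> (\<forall>b\<in>R. v \<bullet> b \<noteq> 0) \<Longrightarrow> sdom (w v)"
proof -
  assume w: "w \<in> W" and d: "dom (w v)" and r: "\<forall>b\<in>R. v \<bullet> b \<noteq> 0"
  show "sdom (w v)" unfolding sdom_def
  proof
    fix a assume a: "a \<in> D"
    have "w v \<bullet> a = v \<bullet> inv w a" using W_inner_inv[OF w] .
    moreover have "inv w a \<in> R" using W_R[OF W_inv[OF w]] a DR by auto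
    ultimately have "w v \<bullet> a \<noteq> 0" using r by auto
    then show "w v \<bullet> a > 0" using d a unfolding dom_def by force
  qed
qed

lemma sdom_minus_rho: "wl v \<Longrightarrow> sdom v \<Longrightarrow> dom (v - rh)"
proof -
  assume wv: "wl v" and s: "sdom v"
  show "dom (v - rh)" unfolding dom_def
  proof
    fix a assume a: "a \<in> D"
    have aa: "a \<bullet> a > 0" using a D0 by (metis inner_gt_zero_iff)
    have "cp v a \<in> \<int>" using wv a DR unfolding wl_def by auto
    moreover have "cp v a > 0" using s a aa unfolding sdom_def cp_def by simp
    ultimately have "cp v a \<ge> 1" by (auto elim!: Ints_cases)
    then have "cp (v - rh) a \<ge> 0" using cp_rho[OF a] by (simp add: cp_diff)
    then show "(v - rh) \<bullet> a \<ge> 0" using aa unfolding cp_def by (simp add: zero_le_divide_iff)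
  qed
qed

end


abbreviation "lk \<equiv> Poly_Mapping.lookup"
abbreviation "ks \<equiv> Poly_Mapping.keys"
abbreviation "sg \<equiv> Poly_Mapping.single"

lemma two_nz: "(2::Cq) \<noteq> 0"
proof
  assume "(2::Cq) = 0"
  moreover have "Fract (of_nat 2) 1 = (of_nat 2 :: Cq)" by (rule Fract_of_nat_eq)
  moreover have "(of_nat 2 :: Cq) = 2" by simp
  ultimately have "Fract (of_nat 2) 1 = (Fract 0 1 :: Cq)" by (simp only: Zero_fract_def)
  then have "(of_nat 2 :: complex poly) * 1 = 0 * 1" by (subst (asm) eq_fract) auto
  then have "(of_nat 2 :: complex poly) = 0" by simp
  then have "poly (of_nat 2 :: complex poly) 0 = 0" by simp
  then show False by (simp add: of_nat_poly)
qed

lemma self_neg_zero: "(x::Cq) = - x \<Longrightarrow> x = 0"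
proof -
  assume h: "x = - x"
  have "x + x = x + - x" using h by (rule arg_cong)
  then have "x + x = 0" by (simp only: right_minus)
  then have "2 * x = 0" by (simp only: mult_2)
  then show "x = 0" using two_nz by simp
qed

lemma lookup_scal: "lk (scal c x) k = c * lk x k"
  unfolding scal_def mult_map_scale_conv_mult[symmetric] Poly_Mapping.map.rep_eq by (simp add: when_def)

lemma scal_add: "scal c (x + y) = scal c x + scal c y"
  by (simp add: scal_def distrib_left)
lemma scal_add2: "scal (c + d) x = scal c x + scal d x"
  by (simp add: scal_def single_add distrib_right)
lemma scal_scal: "scal c (scal d x) = scal (c * d) x"
  by (simp add: scal_def mult.assoc[symmetric] mult_single)
lemma scal_mult: "scal c (x * y) = x * scal c y"
  by (simp add: scal_def mult.left_commute)
lemma scal_mult2: "scal c x * y = scal c (x * y)"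
  by (simp add: scal_def mult.assoc)
lemma scal_one[simp]: "scal 1 x = x"
  by (simp add: scal_def)
lemma scal_zero[simp]: "scal 0 x = 0" "scal c 0 = 0"
  by (simp_all add: scal_def)
lemma scal_sum: "scal c (sum f S) = (\<Sum>i\<in>S. scal c (f i))"
  by (simp add: scal_def sum_distrib_left)
lemma scal_diff: "scal c (x - y) = scal c x - scal c y"
  by (simp add: scal_def right_diff_distrib)
lemma scal_sg: "scal c (sg k d) = sg k (c * d)"
  by (simp add: scal_def mult_single)

definition pmap :: "('a \<Rightarrow> 'b) \<Rightarrow> ('a \<Rightarrow>\<^sub>0 'c::comm_monoid_add) \<Rightarrow> ('b \<Rightarrow>\<^sub>0 'c)" where
  "pmap \<phi> f = (\<Sum>k\<in>ks f. sg (\<phi> k) (lk f k))"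

lemma pmap_superset: "finite S \<Longrightarrow> ks f \<subseteq> S \<Longrightarrow> pmap \<phi> f = (\<Sum>k\<in>S. sg (\<phi> k) (lk f k))"
  unfolding pmap_def by (rule sum.mono_neutral_left) (auto simp: in_keys_iff)

lemma pmap_add: "pmap \<phi> (f + g) = pmap \<phi> f + pmap \<phi> g"
proof -
  let ?S = "ks f \<union> ks g"
  have fin: "finite ?S" by simp
  have "pmap \<phi> (f + g) = (\<Sum>k\<in>?S. sg (\<phi> k) (lk (f + g) k))"
    by (rule pmap_superset[OF fin]) (rule keys_add)
  also have "\<dots> = (\<Sum>k\<in>?S. sg (\<phi> k) (lk f k)) + (\<Sum>k\<in>?S. sg (\<phi> k) (lk g k))"
    by (simp add: lookup_add single_add sum.distrib)
  also have "\<dots> = pmap \<phi> f + pmap \<phi> g"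
    by (simp add: pmap_superset[OF fin])
  finally show ?thesis .
qed

lemma pmap_zero[simp]: "pmap \<phi> 0 = 0"
  by (simp add: pmap_def)

lemma pmap_single[simp]: "pmap \<phi> (sg k c) = sg (\<phi> k) c"
  by (cases "c = 0") (simp_all add: pmap_def)

lemma pmap_sum: "pmap \<phi> (sum F I) = (\<Sum>i\<in>I. pmap \<phi> (F i))"
  by (induction I rule: infinite_finite_induct) (simp_all add: pmap_add)

lemma pmap_diff: "pmap \<phi> (f - g) = pmap \<phi> f - (pmap \<phi> g :: _ \<Rightarrow>\<^sub>0 'c::ab_group_add)"
proof -
  have "pmap \<phi> f = pmap \<phi> (f - g) + pmap \<phi> g" using pmap_add[of \<phi> "f - g" g] by simp
  then show ?thesis by simp
qed

lemma lookup_pmap_inj: "inj \<phi> \<Longrightarrow> lk (pmap \<phi> f) (\<phi> x) = lk f x"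
proof -
  assume inj: "inj \<phi>"
  have "lk (pmap \<phi> f) (\<phi> x) = (\<Sum>k\<in>ks f. lk (sg (\<phi> k) (lk f k)) (\<phi> x))"
    by (simp add: pmap_def lookup_sum)
  also have "\<dots> = (\<Sum>k\<in>ks f. if k = x then lk f k else 0)"
    by (rule sum.cong) (auto simp: lookup_single when_def inj_eq[OF inj])
  also have "\<dots> = lk f x" by (simp add: sum.delta in_keys_iff)
  finally show ?thesis .
qed

lemma lookup_pmap_notin: "y \<notin> range \<phi> \<Longrightarrow> lk (pmap \<phi> f) y = 0"
  by (auto simp: pmap_def lookup_sum lookup_single when_def intro!: sum.neutral)

lemma pmap_id: "pmap (\<lambda>x. x) f = f"
  by (rule poly_mapping_eqI) (metis inj_on_id2 lookup_pmap_inj)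

lemma pm_expand: "(\<Sum>k\<in>ks f. sg k (lk f k)) = f"
  using pmap_id[of f] unfolding pmap_def .

lemma mult_expand: "(f::('a::monoid_add \<Rightarrow>\<^sub>0 'c::comm_semiring_1)) * g = (\<Sum>a\<in>ks f. \<Sum>b\<in>ks g. sg (a + b) (lk f a * lk g b))"
proof -
  have "f * g = (\<Sum>a\<in>ks f. sg a (lk f a)) * (\<Sum>b\<in>ks g. sg b (lk g b))"
    by (simp only: pm_expand)
  also have "\<dots> = (\<Sum>a\<in>ks f. \<Sum>b\<in>ks g. sg a (lk f a) * sg b (lk g b))"
    by (simp add: sum_product)
  finally show ?thesis by (simp add: mult_single)
qed

lemma lookup_mult_keys: "lk ((f::('a::monoid_add \<Rightarrow>\<^sub>0 'c::comm_semiring_1)) * g) z =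
  (\<Sum>a\<in>ks f. \<Sum>b\<in>ks g. if a + b = z then lk f a * lk g b else 0)"
  by (subst mult_expand) (simp add: lookup_sum lookup_single when_def)

lemma pmap_mult:
  assumes add: "\<And>x y. \<phi> (x + y) = \<phi> x + \<phi> y"
  shows "pmap \<phi> ((f::('a::monoid_add \<Rightarrow>\<^sub>0 'c::comm_semiring_1)) * g) = pmap \<phi> f * pmap \<phi> g"
proof -
  have "pmap \<phi> (f * g) = (\<Sum>a\<in>ks f. \<Sum>b\<in>ks g. sg (\<phi> a + \<phi> b) (lk f a * lk g b))"
    by (subst mult_expand) (simp add: pmap_sum add)
  also have "\<dots> = (\<Sum>a\<in>ks f. \<Sum>b\<in>ks g. sg (\<phi> a) (lk f a) * sg (\<phi> b) (lk g b))"
    by (simp add: mult_single)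
  also have "\<dots> = pmap \<phi> f * pmap \<phi> g"
    by (simp add: pmap_def sum_product)
  finally show ?thesis .
qed

lemma pmap_one:
  assumes "\<phi> 0 = 0"
  shows "pmap \<phi> (1::('a::zero \<Rightarrow>\<^sub>0 'c::comm_semiring_1)) = 1"
  using pmap_single[of \<phi> 0 "1::'c"] assms by simp

lemma pmap_scal:
  assumes add: "\<And>x y. \<phi> (x + y) = \<phi> x + \<phi> y"
  shows "pmap \<phi> (scal c x) = scal c (pmap \<phi> x)"
proof -
  have "\<phi> 0 = 0" using add[of 0 0] by simp
  then have "pmap \<phi> (sg 0 c * x) = sg 0 c * pmap \<phi> x"
    using pmap_mult[OF add, of "sg 0 c" x] pmap_single[of \<phi> 0 c] by simp
  then show ?thesis unfolding scal_def .
qed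



context rsys begin

definition winv :: "'n gring \<Rightarrow> bool" where "winv f \<longleftrightarrow> (\<forall>w\<in>W. \<forall>v. lk f (w v) = lk f v)"
definition anti :: "'n gring \<Rightarrow> bool" where "anti g \<longleftrightarrow> (\<forall>w\<in>W. \<forall>v. lk g (w v) = wsgn w * lk g v)"

lemma W_inv_inv: "w \<in> W \<Longrightarrow> inv (inv w) = w"
  using W_bij inv_inv_eq by blast

lemma lookup_pmap_W: "u \<in> W \<Longrightarrow> lk (pmap u h) v = lk h (inv u v)"
proof -
  assume u: "u \<in> W"
  have "lk (pmap u h) v = lk (pmap u h) (u (inv u v))" using u by simp
  also have "\<dots> = lk h (inv u v)" using lookup_pmap_inj[of u] W_bij[OF u] bij_is_inj by blast
  finally show ?thesis .
qed

lemma lookup_via_pmap: "w \<in> W \<Longrightarrow> lk h (w v) = lk (pmap (inv w) h) v"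
  using lookup_pmap_W[OF W_inv, of w h v] W_inv_inv[of w] by simp

lemma pmap_W_mult: "u \<in> W \<Longrightarrow> pmap u (f * g) = pmap u f * pmap u (g :: 'n gring)"
  by (rule pmap_mult) (rule W_add)

lemma anti_mult: "winv f \<Longrightarrow> anti g \<Longrightarrow> anti (f * g)"
  unfolding anti_def
proof (intro ballI allI)
  fix w v assume f: "winv f" and g: "\<forall>w\<in>W. \<forall>v. lk g (w v) = wsgn w * lk g v" and w: "w \<in> W"
  let ?u = "inv w"
  have u: "?u \<in> W" using W_inv[OF w] .
  have pf: "pmap ?u f = f"
    by (rule poly_mapping_eqI) (simp add: lookup_pmap_W[OF u] W_inv_inv[OF w] w f[unfolded winv_def])
  have pg: "pmap ?u g = scal (wsgn w) g"
    by (rule poly_mapping_eqI) (simp add: lookup_pmap_W[OF u] W_inv_inv[OF w] w g lookup_scal)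
  have "lk (f * g) (w v) = lk (pmap ?u (f * g)) v" using lookup_via_pmap[OF w] .
  also have "\<dots> = lk (f * scal (wsgn w) g) v" using pmap_W_mult[OF u] pf pg by simp
  also have "\<dots> = wsgn w * lk (f * g) v" by (simp add: scal_mult[symmetric] lookup_scal)
  finally show "lk (f * g) (w v) = wsgn w * lk (f * g) v" .
qed

lemma anti_add: "anti f \<Longrightarrow> anti g \<Longrightarrow> anti (f + g)"
  by (simp add: anti_def lookup_add distrib_left)
lemma anti_diff: "anti f \<Longrightarrow> anti g \<Longrightarrow> anti (f - g)"
  by (simp add: anti_def lookup_minus right_diff_distrib)
lemma anti_scal: "anti f \<Longrightarrow> anti (scal c f)"
  by (simp add: anti_def lookup_scal mult.left_commute)
lemma anti_zero: "anti 0" by (simp add: anti_def)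
lemma anti_sum: "(\<And>i. i \<in> I \<Longrightarrow> anti (F i)) \<Longrightarrow> anti (sum F I)"
  by (induction I rule: infinite_finite_induct) (auto simp: anti_zero anti_add)

lemma winv_add: "winv f \<Longrightarrow> winv g \<Longrightarrow> winv (f + g)"
  by (simp add: winv_def lookup_add)
lemma winv_diff: "winv f \<Longrightarrow> winv g \<Longrightarrow> winv (f - g)"
  by (simp add: winv_def lookup_minus)
lemma winv_scal: "winv f \<Longrightarrow> winv (scal c f)"
  by (simp add: winv_def lookup_scal)
lemma winv_zero: "winv 0" by (simp add: winv_def)
lemma winv_sum: "(\<And>i. i \<in> I \<Longrightarrow> winv (F i)) \<Longrightarrow> winv (sum F I)"
  by (induction I rule: infinite_finite_induct) (auto simp: winv_zero winv_add)

lemma alt_term: "scal (wsgn w) (gexp (w mu)) = sg (w mu) (wsgn w)"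
  by (simp add: gexp_def scal_sg)

lemma lookup_alt: "lk (alt R mu) nu = (\<Sum>w\<in>W. if w mu = nu then wsgn w else 0)"
  unfolding alt_def by (simp add: lookup_sum alt_term lookup_single when_def)

lemma comp_bij: "u \<in> W \<Longrightarrow> bij_betw (\<lambda>w. u \<circ> w) W W"
proof (rule bij_betw_imageI)
  assume u: "u \<in> W"
  show "inj_on (\<lambda>w. u \<circ> w) W"
  proof (rule inj_onI)
    fix w1 w2 assume "u \<circ> w1 = u \<circ> w2"
    then have "w1 x = w2 x" for x using W_inj[OF u] by (metis comp_apply)
    then show "w1 = w2" by auto
  qed
  show "(\<lambda>w. u \<circ> w) ` W = W"
  proof
    show "(\<lambda>w. u \<circ> w) ` W \<subseteq> W" using W_comp[OF u] by auto
    show "W \<subseteq> (\<lambda>w. u \<circ> w) ` W"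
    proof
      fix w assume w: "w \<in> W"
      have "u \<circ> (inv u \<circ> w) = w" using u by (auto simp: fun_eq_iff)
      moreover have "inv u \<circ> w \<in> W" using W_comp[OF W_inv[OF u] w] .
      ultimately show "w \<in> (\<lambda>w. u \<circ> w) ` W" by (metis image_eqI)
    qed
  qed
qed

lemma anti_alt: "anti (alt R mu)"
  unfolding anti_def
proof (intro ballI allI)
  fix u nu assume u: "u \<in> W"
  have "lk (alt R mu) (u nu) = (\<Sum>w\<in>W. if w mu = u nu then wsgn w else 0)" by (rule lookup_alt)
  also have "\<dots> = (\<Sum>w\<in>W. if (u \<circ> w) mu = u nu then wsgn (u \<circ> w) else 0)"
    using sum.reindex_bij_betw[OF comp_bij[OF u], of "\<lambda>w. if w mu = u nu then wsgn w else 0"] by simp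
  also have "\<dots> = (\<Sum>w\<in>W. wsgn u * (if w mu = nu then wsgn w else 0))"
    by (rule sum.cong) (auto simp: W_inj[OF u] wsgn_mult[OF u])
  also have "\<dots> = wsgn u * lk (alt R mu) nu" by (simp add: lookup_alt sum_distrib_left)
  finally show "lk (alt R mu) (u nu) = wsgn u * lk (alt R mu) nu" .
qed

lemma alt_sdom: "sdom mu \<Longrightarrow> sdom nu \<Longrightarrow> lk (alt R mu) nu = (if mu = nu then 1 else 0)"
proof -
  assume s: "sdom mu" "sdom nu"
  have "lk (alt R mu) nu = (\<Sum>w\<in>W. if w = id then (if mu = nu then 1 else 0) else 0)"
    unfolding lookup_alt
  proof (rule sum.cong)
    fix w assume w: "w \<in> W"
    show "(if w mu = nu then wsgn w else 0) = (if w = id then (if mu = nu then 1 else 0) else 0)"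
      using stab[OF w s(1)] s(2) by auto
  qed simp
  also have "\<dots> = (if mu = nu then 1 else 0)" using W_finite weyl_group.id[of R] by (simp add: sum.delta)
  finally show ?thesis .
qed

lemma anti_fixed: "anti g \<Longrightarrow> b \<in> R \<Longrightarrow> v \<bullet> b = 0 \<Longrightarrow> lk g v = 0"
proof -
  assume g: "anti g" and b: "b \<in> R" and vb: "v \<bullet> b = 0"
  have b0: "b \<noteq> 0" using b zR by auto
  have e: "lk g (refl b v) = wsgn (refl b) * lk g v" using g refl_W[OF b] unfolding anti_def by blast
  have "lk g v = lk g (refl b v)" using refl_orth[OF vb] by simp
  also have "\<dots> = - lk g v" unfolding e wsgn_refl[OF b0] by simp
  finally have "lk g v = - lk g v" .
  then show ?thesis by (rule self_neg_zero)
qed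

lemma anti_back: "anti g \<Longrightarrow> w \<in> W \<Longrightarrow> lk g v = wsgn w * lk g (w v)"
proof -
  assume g: "anti g" and w: "w \<in> W"
  have "lk g (w v) = wsgn w * lk g v" using g w unfolding anti_def by blast
  then have "wsgn w * lk g (w v) = (wsgn w * wsgn w) * lk g v" by (simp only: mult.assoc)
  also have "\<dots> = lk g v" by (simp only: wsgn_sq mult_1)
  finally show ?thesis by (rule sym)
qed

lemma decomp:
  assumes g: "anti g"
  shows "g = (\<Sum>mu\<in>{mu\<in>ks g. sdom mu}. scal (lk g mu) (alt R mu))"
proof (rule poly_mapping_eqI)
  fix nu
  let ?S = "{mu\<in>ks g. sdom mu}"
  let ?h = "\<Sum>mu\<in>?S. scal (lk g mu) (alt R mu)"
  have fS: "finite ?S" by simp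
  have h: "anti ?h" by (intro anti_sum anti_scal anti_alt)
  have key: "lk g v = lk ?h v" if d: "dom v" for v
  proof (cases "sdom v")
    case True
    have "lk ?h v = (\<Sum>mu\<in>?S. lk g mu * lk (alt R mu) v)"
      by (simp only: lookup_sum lookup_scal)
    also have "\<dots> = (\<Sum>mu\<in>?S. lk g mu * (if mu = v then 1 else 0))"
      by (rule sum.cong) (auto simp only: alt_sdom True mem_Collect_eq)
    also have "\<dots> = (\<Sum>mu\<in>?S. if mu = v then lk g mu else 0)" by (rule sum.cong) auto
    also have "\<dots> = lk g v" using fS True by (simp add: sum.delta in_keys_iff)
    finally show ?thesis by simp
  next
    case False
    then obtain a where a: "a \<in> D" "v \<bullet> a = 0" using d unfolding dom_def sdom_def by force
    have "a \<in> R" using a DR by auto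
    then have "lk g v = 0" "lk ?h v = 0" using anti_fixed[OF g] anti_fixed[OF h] a by blast+
    then show ?thesis by simp
  qed
  obtain w where w: "w \<in> W" "dom (w nu)" using dom_conj by blast
  have "lk g nu = wsgn w * lk g (w nu)" using anti_back[OF g w(1)] .
  also have "\<dots> = wsgn w * lk ?h (w nu)" using key[OF w(2)] by simp
  also have "\<dots> = lk ?h nu" using anti_back[OF h w(1), of nu] by (rule sym)
  finally show "lk g nu = lk ?h nu" .
qed

lemma alt_keys: "b \<in> ks (alt R mu) \<Longrightarrow> \<exists>w\<in>W. w mu = b"
proof (rule ccontr)
  assume b: "b \<in> ks (alt R mu)" and "\<not> (\<exists>w\<in>W. w mu = b)"
  then have "lk (alt R mu) b = 0" unfolding lookup_alt by (intro sum.neutral) auto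
  then show False using b by (simp add: in_keys_iff)
qed

lemma orbit_inner_le: "w \<in> W \<Longrightarrow> w v \<bullet> v \<le> v \<bullet> v"
proof -
  assume w: "w \<in> W"
  have "w v \<bullet> v \<le> norm (w v) * norm v" by (rule norm_cauchy_schwarz)
  also have "norm (w v) = norm v" using W_inner[OF w] by (simp add: norm_eq_sqrt_inner)
  finally show ?thesis by (simp add: power2_norm_eq_inner[symmetric] power2_eq_square)
qed

lemma orbit_inner_eq: "w \<in> W \<Longrightarrow> w v \<bullet> v = v \<bullet> v \<Longrightarrow> w v = v"
proof -
  assume w: "w \<in> W" and e: "w v \<bullet> v = v \<bullet> v"
  have "(w v - v) \<bullet> (w v - v) = w v \<bullet> w v - 2 * (w v \<bullet> v) + v \<bullet> v"
    by (simp add: inner_diff_left inner_diff_right inner_commute)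
  also have "\<dots> = 0" using W_inner[OF w] e by simp
  finally show ?thesis by simp
qed

lemma cancel:
  assumes z: "f * alt R rh = 0"
  shows "f = 0"
proof (rule ccontr)
  assume f0: "f \<noteq> 0"
  let ?A = "alt R rh"
  let ?F = "(\<lambda>k. k \<bullet> rh) ` ks f"
  have ne: "?F \<noteq> {}" using f0 by simp
  have fin: "finite ?F" by simp
  obtain a where a: "a \<in> ks f" "a \<bullet> rh = Max ?F" using Max_in[OF fin ne] by auto
  have le: "k \<bullet> rh \<le> a \<bullet> rh" if "k \<in> ks f" for k using Max_ge[OF fin] that a(2) by auto
  have Arh: "lk ?A rh = 1" using alt_sdom[OF sdom_rho sdom_rho] by simp
  then have rhk: "rh \<in> ks ?A" by (simp add: in_keys_iff)
  have summand: "(if k + b = a + rh then lk f k * lk ?A b else 0) =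
      (if k = a then (if b = rh then lk f k * lk ?A b else 0) else 0)"
    if k: "k \<in> ks f" and b: "b \<in> ks ?A" for k b
  proof (cases "k + b = a + rh")
    case True
    obtain w where w: "w \<in> W" "w rh = b" using alt_keys[OF b] by blast
    have "(k + b) \<bullet> rh = (a + rh) \<bullet> rh" using True by simp
    then have "k \<bullet> rh + b \<bullet> rh = a \<bullet> rh + rh \<bullet> rh" by (simp add: inner_add_left)
    moreover have "b \<bullet> rh \<le> rh \<bullet> rh" using orbit_inner_le[OF w(1), of rh] w(2) by simp
    moreover have "k \<bullet> rh \<le> a \<bullet> rh" using le[OF k] .
    ultimately have "b \<bullet> rh = rh \<bullet> rh" by linarith
    then have "b = rh" using orbit_inner_eq[OF w(1), of rh] w(2) by simp
    then show ?thesis using True by simp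
  next
    case False
    then show ?thesis by auto
  qed
  have "lk (f * ?A) (a + rh) = (\<Sum>k\<in>ks f. \<Sum>b\<in>ks ?A. if k + b = a + rh then lk f k * lk ?A b else 0)"
    by (rule lookup_mult_keys)
  also have "\<dots> = (\<Sum>k\<in>ks f. \<Sum>b\<in>ks ?A. if k = a then (if b = rh then lk f k * lk ?A b else 0) else 0)"
    by (intro sum.cong refl) (rule summand)
  also have "\<dots> = (\<Sum>k\<in>ks f. if k = a then (\<Sum>b\<in>ks ?A. if b = rh then lk f k * lk ?A b else 0) else 0)"
    by (rule sum.cong) auto
  also have "\<dots> = (\<Sum>k\<in>ks f. if k = a then lk f k * lk ?A rh else 0)"
    by (rule sum.cong) (use rhk in \<open>auto simp: sum.delta\<close>)
  also have "\<dots> = lk f a" using a(1) Arh by (simp add: sum.delta)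
  finally have "lk (f * ?A) (a + rh) = lk f a" .
  then show False using z a(1) by (simp add: in_keys_iff)
qed

lemma character_eq:
  assumes "f * alt R rh = alt R (lam + rh)"
  shows "character R D lam = f"
  unfolding character_def
proof (rule the_equality)
  show "f * alt R rh = alt R (lam + rh)" by fact
  fix f' assume "f' * alt R rh = alt R (lam + rh)"
  then have "(f' - f) * alt R rh = 0" using assms by (simp add: left_diff_distrib)
  then show "f' = f" using cancel[of "f' - f"] by simp
qed

end


lemma ks_add: "ks (f + g) \<subseteq> ks f \<union> ks g"
  by (auto simp: in_keys_iff lookup_add)
lemma ks_diff: "ks (f - g) \<subseteq> ks f \<union> ks (g :: 'a \<Rightarrow>\<^sub>0 'b::ab_group_add)"
  by (auto simp: in_keys_iff lookup_minus)
lemma ks_scal: "ks (scal c x) \<subseteq> ks x"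
  by (auto simp: in_keys_iff lookup_scal)
lemma ks_sum: "ks (sum F I) \<subseteq> (\<Union>i\<in>I. ks (F i))"
proof (induction I rule: infinite_finite_induct)
  case (insert x F) then show ?case using ks_add by fastforce
qed auto

lemma ks_mult: "x \<in> ks ((f::'n::finite gring) * g) \<Longrightarrow> \<exists>a\<in>ks f. \<exists>b\<in>ks g. x = a + b"
proof (rule ccontr)
  assume x: "x \<in> ks (f * g)" and n: "\<not> (\<exists>a\<in>ks f. \<exists>b\<in>ks g. x = a + b)"
  have "lk (f * g) x = 0" unfolding lookup_mult_keys
    using n by (intro sum.neutral ballI) auto
  then show False using x by (simp add: in_keys_iff)
qed

context rsys begin

definition orbit :: "real^'n \<Rightarrow> (real^'n) set" where "orbit lam = (\<lambda>w. w lam) ` W"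
definition orb :: "real^'n \<Rightarrow> 'n gring" where "orb lam = (\<Sum>nu\<in>orbit lam. gexp nu)"

lemma fin_orbit: "finite (orbit lam)" unfolding orbit_def using W_finite by simp

lemma lookup_orb: "lk (orb lam) nu = (if nu \<in> orbit lam then 1 else 0)"
  unfolding orb_def gexp_def using fin_orbit by (simp add: lookup_sum lookup_single when_def sum.delta)

lemma orbit_W: "w \<in> W \<Longrightarrow> w nu \<in> orbit lam \<longleftrightarrow> nu \<in> orbit lam"
proof
  assume w: "w \<in> W" and "w nu \<in> orbit lam"
  then obtain u where u: "u \<in> W" "w nu = u lam" unfolding orbit_def by auto
  then have "nu = (inv w \<circ> u) lam" using w by (metis W_apply_inv comp_apply)
  then show "nu \<in> orbit lam" unfolding orbit_def using W_comp[OF W_inv[OF w] u(1)] by blast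
next
  assume w: "w \<in> W" and "nu \<in> orbit lam"
  then obtain u where u: "u \<in> W" "nu = u lam" unfolding orbit_def by auto
  then have e: "w nu = (w \<circ> u) lam" by simp
  show "w nu \<in> orbit lam" unfolding orbit_def image_iff using W_comp[OF w u(1)] e by blast
qed

lemma winv_orb: "winv (orb lam)"
  unfolding winv_def lookup_orb using orbit_W by simp

lemma ks_orb: "ks (orb lam) \<subseteq> orbit lam"
  by (auto simp: in_keys_iff lookup_orb split: if_splits)

lemma lam_orbit: "lam \<in> orbit lam"
  unfolding orbit_def by (rule image_eqI[of _ _ id]) (simp_all add: weyl_group.id)

lemma wl_add: "wl u \<Longrightarrow> wl v \<Longrightarrow> wl (u + v)"
  by (simp add: wl_def cp_add)
lemma wl_sub: "wl u \<Longrightarrow> wl v \<Longrightarrow> wl (u - v)"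
  by (simp add: wl_def cp_diff)

lemma D_ne: "D \<noteq> {}"
proof
  assume "D = {}"
  then have "span D = {0}" by simp
  moreover have "(axis undefined 1 :: real^'n) \<noteq> 0" by (simp add: axis_eq_0_iff)
  ultimately show False using spanD by auto
qed

definition del :: real where "del = Min ((\<lambda>a. rh \<bullet> a) ` D)"

lemma del_pos: "del > 0"
  unfolding del_def using finD D_ne rho_inner_pos by (subst Min_gr_iff) auto

lemma del_le: "a \<in> D \<Longrightarrow> del \<le> rh \<bullet> a"
  unfolding del_def using finD by (intro Min_le) auto

lemma dom_rh: "dom v \<Longrightarrow> v \<bullet> rh \<ge> 0"
proof -
  assume d: "dom v"
  have "v \<bullet> rh = (1/2) * (\<Sum>b\<in>Rp. v \<bullet> b)" unfolding rho_def by (simp add: inner_sum_right)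
  moreover have "(\<Sum>b\<in>Rp. v \<bullet> b) \<ge> 0" using dom_pos[OF d] by (intro sum_nonneg) auto
  ultimately show ?thesis by simp
qed

lemma qplus_rh: "qplus q \<Longrightarrow> q \<noteq> 0 \<Longrightarrow> q \<bullet> rh \<ge> del"
proof -
  assume q: "qplus q" "q \<noteq> 0"
  have "q \<bullet> rh = (\<Sum>a\<in>D. coef a q * (rh \<bullet> a))" using inner_expand[of rh q] by (simp add: inner_commute)
  also have "\<dots> \<ge> (\<Sum>a\<in>D. coef a q * del)"
    using q(1) del_le unfolding qplus_def by (intro sum_mono mult_left_mono) auto
  also have "(\<Sum>a\<in>D. coef a q * del) = ht q * del" by (simp add: ht_def sum_distrib_right)
  finally have "q \<bullet> rh \<ge> ht q * del" .
  moreover have "ht q \<ge> 1" using qplus_ht1 q by blast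
  ultimately show ?thesis using del_pos by (smt (verit) mult_right_mono mult_cancel_right1)
qed

lemma dom_rho: "dom rh" using sdom_dom sdom_rho by blast

lemma lead_coeff:
  assumes wl: "wl lam" and d: "dom lam"
  shows "lk (orb lam * alt R rh) (lam + rh) = 1"
proof -
  let ?m = "orb lam" and ?A = "alt R rh"
  have Arh: "lk ?A rh = 1" using alt_sdom[OF sdom_rho sdom_rho] by simp
  then have rhk: "rh \<in> ks ?A" by (simp add: in_keys_iff)
  have mlam: "lk ?m lam = 1" using lam_orbit by (simp add: lookup_orb)
  then have lk: "lam \<in> ks ?m" by (simp add: in_keys_iff)
  have summand: "(if k + b = lam + rh then lk ?m k * lk ?A b else 0) =
      (if k = lam then (if b = rh then lk ?m k * lk ?A b else 0) else 0)"
    if k: "k \<in> ks ?m" and b: "b \<in> ks ?A" for k b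
  proof (cases "k + b = lam + rh")
    case True
    obtain w where w: "w \<in> W" "w rh = b" using alt_keys[OF b] by blast
    obtain u where u: "u \<in> W" "u lam = k" using ks_orb k unfolding orbit_def by auto
    have q1: "qplus (lam - k)" using dom_diff[OF wl d u(1)] u(2) by simp
    have q2: "qplus (rh - b)" using dom_diff[OF rho_wl dom_rho w(1)] w(2) by simp
    have "(lam - k) + (rh - b) = 0" using True by (simp add: algebra_simps)
    then have "lam - k = 0" using qplus_antisym[OF q1 q2] by blast
    then show ?thesis using True by auto
  qed auto
  have "lk (?m * ?A) (lam + rh) = (\<Sum>k\<in>ks ?m. \<Sum>b\<in>ks ?A. if k + b = lam + rh then lk ?m k * lk ?A b else 0)"
    by (rule lookup_mult_keys)
  also have "\<dots> = (\<Sum>k\<in>ks ?m. \<Sum>b\<in>ks ?A. if k = lam then (if b = rh then lk ?m k * lk ?A b else 0) else 0)"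
    by (intro sum.cong refl) (rule summand)
  also have "\<dots> = (\<Sum>k\<in>ks ?m. if k = lam then (\<Sum>b\<in>ks ?A. if b = rh then lk ?m k * lk ?A b else 0) else 0)"
    by (rule sum.cong) auto
  also have "\<dots> = (\<Sum>k\<in>ks ?m. if k = lam then lk ?m k * lk ?A rh else 0)"
    by (rule sum.cong) (use rhk in \<open>auto simp: sum.delta\<close>)
  also have "\<dots> = 1" using lk mlam Arh by (simp add: sum.delta)
  finally show ?thesis .
qed

end


context rsys begin

definition Pchar :: "real^'n \<Rightarrow> 'n gring \<Rightarrow> bool" where
  "Pchar lam chi \<longleftrightarrow> winv chi \<and> (\<forall>k\<in>ks chi. intq (k - lam)) \<and> chi * alt R rh = alt R (lam + rh)"

definition meas :: "real^'n \<Rightarrow> nat" where "meas lam = nat (floor ((lam \<bullet> rh) / del))"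

lemma meas_less:
  assumes d: "dom lam'" and q: "qplus (lam - lam')" and ne: "lam' \<noteq> lam"
  shows "meas lam' < meas lam"
proof -
  have "lam - lam' \<noteq> 0" using ne by simp
  then have "(lam - lam') \<bullet> rh \<ge> del" using qplus_rh q by blast
  then have "lam' \<bullet> rh \<le> lam \<bullet> rh - del" by (simp add: inner_diff_left)
  then have "(lam' \<bullet> rh) / del \<le> (lam \<bullet> rh) / del - 1" using del_pos by (simp add: field_simps)
  moreover have "(lam' \<bullet> rh) / del \<ge> 0" using dom_rh[OF d] del_pos by simp
  ultimately have "floor ((lam' \<bullet> rh) / del) \<le> floor ((lam \<bullet> rh) / del) - 1"
    "floor ((lam' \<bullet> rh) / del) \<ge> 0"
    using floor_mono[of "(lam' \<bullet> rh) / del" "(lam \<bullet> rh) / del - 1"] by auto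
  then show ?thesis unfolding meas_def by linarith
qed

lemma char_exists: "wl lam \<Longrightarrow> dom lam \<Longrightarrow> \<exists>chi. Pchar lam chi"
proof (induction "meas lam" arbitrary: lam rule: less_induct)
  case less
  let ?m = "orb lam" and ?A = "alt R rh"
  let ?g = "?m * ?A"
  have ag: "anti ?g" by (rule anti_mult[OF winv_orb anti_alt])
  let ?S = "{mu\<in>ks ?g. sdom mu}"
  let ?S' = "?S - {lam + rh}"
  have fin: "finite ?S" by simp
  have dg: "?g = (\<Sum>mu\<in>?S. scal (lk ?g mu) (alt R mu))" by (rule decomp[OF ag])
  have key: "wl (mu - rh) \<and> dom (mu - rh) \<and> qplus (lam - (mu - rh))" if mu: "mu \<in> ?S" for mu
  proof -
    obtain k b where kb: "k \<in> ks ?m" "b \<in> ks ?A" "mu = k + b" using ks_mult mu by blast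
    obtain u where u: "u \<in> W" "u lam = k" using ks_orb kb(1) unfolding orbit_def by auto
    obtain w where w: "w \<in> W" "w rh = b" using alt_keys kb(2) by blast
    have q1: "qplus (lam - k)" using dom_diff[OF less.prems u(1)] u(2) by simp
    have q2: "qplus (rh - b)" using dom_diff[OF rho_wl dom_rho w(1)] w(2) by simp
    have wk: "wl k" using wl_W[OF less.prems(1) u(1)] u(2) by simp
    have wb: "wl b" using wl_W[OF rho_wl w(1)] w(2) by simp
    have wmu: "wl mu" using kb(3) wl_add[OF wk wb] by simp
    have "wl (mu - rh)" using wl_sub[OF wmu rho_wl] .
    moreover have "dom (mu - rh)" using sdom_minus_rho[OF wmu] mu by auto
    moreover have e: "lam - (mu - rh) = (lam - k) + (rh - b)" using kb(3) by (simp add: algebra_simps)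
    have "qplus (lam - (mu - rh))" unfolding e by (rule qplus_add[OF q1 q2])
    ultimately show ?thesis by blast
  qed
  have IH: "\<exists>chi. Pchar (mu - rh) chi" if mu: "mu \<in> ?S'" for mu
  proof -
    have k: "wl (mu - rh)" "dom (mu - rh)" "qplus (lam - (mu - rh))" using key mu by auto
    have "mu - rh \<noteq> lam" using mu by auto
    then have "meas (mu - rh) < meas lam" using meas_less k by blast
    then show ?thesis using less.hyps k by blast
  qed
  define C where "C mu = (SOME chi. Pchar (mu - rh) chi)" for mu
  have C: "Pchar (mu - rh) (C mu)" if "mu \<in> ?S'" for mu
    using someI_ex[OF IH[OF that]] unfolding C_def .
  define chi where "chi = ?m - (\<Sum>mu\<in>?S'. scal (lk ?g mu) (C mu))"
  have g1: "lk ?g (lam + rh) = 1" using lead_coeff[OF less.prems] .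
  have sd: "sdom (lam + rh)" unfolding sdom_def
  proof
    fix a assume a: "a \<in> D"
    have "lam \<bullet> a \<ge> 0" using less.prems(2) a unfolding dom_def by auto
    moreover have "rh \<bullet> a > 0" using rho_inner_pos[OF a] .
    ultimately show "(lam + rh) \<bullet> a > 0" by (simp add: inner_add_left)
  qed
  have lr: "lam + rh \<in> ?S" using g1 sd by (simp add: in_keys_iff)
  define T where "T = (\<Sum>mu\<in>?S'. scal (lk ?g mu) (alt R mu))"
  have "chi * ?A = ?g - (\<Sum>mu\<in>?S'. scal (lk ?g mu) (C mu * ?A))"
    unfolding chi_def by (simp add: left_diff_distrib sum_distrib_right scal_mult2)
  also have "(\<Sum>mu\<in>?S'. scal (lk ?g mu) (C mu * ?A)) = T"
    unfolding T_def
  proof (rule sum.cong)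
    fix mu assume mu: "mu \<in> ?S'"
    have "C mu * ?A = alt R (mu - rh + rh)" using C[OF mu] unfolding Pchar_def by blast
    then show "scal (lk ?g mu) (C mu * ?A) = scal (lk ?g mu) (alt R mu)" by simp
  qed simp
  finally have h1: "chi * ?A = ?g - T" .
  have "(\<Sum>mu\<in>?S. scal (lk ?g mu) (alt R mu)) = scal (lk ?g (lam + rh)) (alt R (lam + rh)) + T"
    unfolding T_def by (rule sum.remove[OF fin lr])
  with dg have gT: "?g = scal (lk ?g (lam + rh)) (alt R (lam + rh)) + T" by (rule trans)
  have gT': "?g = scal 1 (alt R (lam + rh)) + T" using gT unfolding g1 .
  have "?g - T = alt R (lam + rh)" by (subst gT') simp
  then have c1: "chi * ?A = alt R (lam + rh)" using h1 by simp
  have c2: "winv chi" unfolding chi_def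
    using C by (intro winv_diff winv_orb winv_sum winv_scal) (auto simp: Pchar_def)
  have c3: "intq (k - lam)" if k: "k \<in> ks chi" for k
  proof -
    have "k \<in> ks ?m \<or> (\<exists>mu\<in>?S'. k \<in> ks (C mu))"
    proof -
      have "k \<in> ks ?m \<union> ks (\<Sum>mu\<in>?S'. scal (lk ?g mu) (C mu))"
        using k ks_diff[of ?m "\<Sum>mu\<in>?S'. scal (lk ?g mu) (C mu)"] unfolding chi_def by (rule subsetD[rotated])
      moreover have "ks (\<Sum>mu\<in>?S'. scal (lk ?g mu) (C mu)) \<subseteq> (\<Union>mu\<in>?S'. ks (scal (lk ?g mu) (C mu)))"
        by (rule ks_sum)
      moreover have "(\<Union>mu\<in>?S'. ks (scal (lk ?g mu) (C mu))) \<subseteq> (\<Union>mu\<in>?S'. ks (C mu))"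
        using ks_scal by (intro UN_mono) auto
      ultimately show ?thesis by blast
    qed
    then show ?thesis
    proof
      assume "k \<in> ks ?m"
      then obtain u where u: "u \<in> W" "u lam = k" using ks_orb unfolding orbit_def by auto
      have "intq (lam - u lam)" using wl_diff[OF less.prems(1) u(1)] .
      then have "intq (- (lam - u lam))" by (rule intq_neg)
      then show ?thesis using u(2) by simp
    next
      assume "\<exists>mu\<in>?S'. k \<in> ks (C mu)"
      then obtain mu where mu: "mu \<in> ?S'" "k \<in> ks (C mu)" by blast
      have i1: "intq (k - (mu - rh))" using C[OF mu(1)] mu(2) unfolding Pchar_def by blast
      have "qplus (lam - (mu - rh))" using key mu(1) by blast
      then have i2: "intq (lam - (mu - rh))" unfolding qplus_def by blast
      have "k - lam = (k - (mu - rh)) - (lam - (mu - rh))" by (simp add: algebra_simps)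
      then show ?thesis using intq_diff[OF i1 i2] by simp
    qed
  qed
  show ?case unfolding Pchar_def using c1 c2 c3 by blast
qed

lemma character_P: "wl lam \<Longrightarrow> dom lam \<Longrightarrow> Pchar lam (character R D lam)"
proof -
  assume "wl lam" "dom lam"
  then obtain chi where chi: "Pchar lam chi" using char_exists by blast
  then have "character R D lam = chi" using character_eq unfolding Pchar_def by blast
  then show ?thesis using chi by simp
qed

end


definition th :: "'n::finite gring \<Rightarrow> 'n gring" where "th = pmap (\<lambda>v. (1/2) *\<^sub>R v)"
definition dbl :: "'n::finite gring \<Rightarrow> 'n gring" where "dbl = pmap (\<lambda>v. 2 *\<^sub>R v)"

lemma inj_half: "inj (\<lambda>v::real^'n::finite. (1/2) *\<^sub>R v)"
  by (rule injI) simp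
lemma inj_two: "inj (\<lambda>v::real^'n::finite. 2 *\<^sub>R v)"
  by (rule injI) simp

lemma lk_th: "lk (th x) v = lk x (2 *\<^sub>R v)"
proof -
  have "lk (th x) v = lk (th x) ((1/2) *\<^sub>R (2 *\<^sub>R v))" by simp
  also have "\<dots> = lk x (2 *\<^sub>R v)" unfolding th_def by (rule lookup_pmap_inj[OF inj_half])
  finally show ?thesis .
qed

lemma lk_dbl: "lk (dbl x) v = lk x ((1/2) *\<^sub>R v)"
proof -
  have "lk (dbl x) v = lk (dbl x) (2 *\<^sub>R ((1/2) *\<^sub>R v))" by simp
  also have "\<dots> = lk x ((1/2) *\<^sub>R v)" unfolding dbl_def by (rule lookup_pmap_inj[OF inj_two])
  finally show ?thesis .
qed

lemma th_dbl: "th (dbl f) = f"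
  by (rule poly_mapping_eqI) (simp add: lk_th lk_dbl)

lemma half_add: "(1/2) *\<^sub>R (x + y) = (1/2) *\<^sub>R x + (1/2) *\<^sub>R (y::real^'n::finite)"
  by (simp add: scaleR_right_distrib)

lemma th_add: "th (x + y) = th x + th y"
  unfolding th_def by (rule pmap_add)
lemma th_mult: "th (x * y) = th x * th y"
  unfolding th_def by (rule pmap_mult) (rule half_add)
lemma th_scal: "th (scal c x) = scal c (th x)"
  unfolding th_def by (rule pmap_scal) (rule half_add)
lemma th_one: "th 1 = 1"
  unfolding th_def by (rule pmap_one) simp
lemma th_inj: "inj th"
proof (rule injI)
  fix x y assume "th x = th y"
  then have "lk x v = lk y v" for v using lk_th[of x "(1/2) *\<^sub>R v"] lk_th[of y "(1/2) *\<^sub>R v"] by simp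
  then show "x = y" by (rule poly_mapping_eqI)
qed

lemma scal_sum_left: "scal (sum c S) y = (\<Sum>i\<in>S. scal (c i) y)"
  by (induction S rule: infinite_finite_induct) (simp_all add: scal_add2)

lemma cspan_sum:
  assumes fin: "finite I" and h: "\<And>i. i \<in> I \<Longrightarrow> h i \<in> T"
  shows "(\<Sum>i\<in>I. scal (c i) (h i)) \<in> cspan T"
proof -
  define c' where "c' f = (\<Sum>i\<in>{i\<in>I. h i = f}. c i)" for f
  have "(\<Sum>i\<in>I. scal (c i) (h i)) = (\<Sum>f\<in>h ` I. \<Sum>i\<in>{i\<in>I. h i = f}. scal (c i) (h i))"
    by (rule sum.image_gen[OF fin])
  also have "\<dots> = (\<Sum>f\<in>h ` I. scal (c' f) f)"
  proof (rule sum.cong)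
    fix f assume "f \<in> h ` I"
    have "(\<Sum>i\<in>{i\<in>I. h i = f}. scal (c i) (h i)) = (\<Sum>i\<in>{i\<in>I. h i = f}. scal (c i) f)"
      by (rule sum.cong) auto
    then show "(\<Sum>i\<in>{i\<in>I. h i = f}. scal (c i) (h i)) = scal (c' f) f"
      unfolding c'_def by (simp add: scal_sum_left)
  qed simp
  finally show ?thesis unfolding cspan_def using fin h by blast
qed

lemma cspan_mono: "S \<subseteq> T \<Longrightarrow> cspan S \<subseteq> cspan T"
  unfolding cspan_def by blast

context rsys begin

definition vp :: "'n gring \<Rightarrow> bool" where
  "vp f \<longleftrightarrow> winv f \<and> (\<forall>k\<in>ks f. wl k \<and> intq (2 *\<^sub>R k))"

lemma vp_add: "vp f \<Longrightarrow> vp g \<Longrightarrow> vp (f + g)"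
  unfolding vp_def using ks_add[of f g] by (auto simp: winv_add)
lemma vp_scal: "vp f \<Longrightarrow> vp (scal c f)"
  unfolding vp_def using ks_scal[of c f] by (auto simp: winv_scal)
lemma vp_zero: "vp 0" by (simp add: vp_def winv_zero)
lemma vp_sum: "(\<And>i. i \<in> I \<Longrightarrow> vp (F i)) \<Longrightarrow> vp (sum F I)"
  by (induction I rule: infinite_finite_induct) (auto simp: vp_zero vp_add)

lemma Psi_iff: "lam \<in> Psi R D \<longleftrightarrow> wl lam \<and> dom lam \<and> intq (2 *\<^sub>R lam)"
  by (auto simp: Psi_def dominant_def wl_iff dom_def intq_root_lattice)

lemma dominant_iff: "lam \<in> dominant R D \<longleftrightarrow> wl lam \<and> dom lam"
  by (auto simp: dominant_def wl_iff dom_def)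

lemma vp_char: "lam \<in> Psi R D \<Longrightarrow> vp (character R D lam)"
proof -
  assume l: "lam \<in> Psi R D"
  then have l': "wl lam" "dom lam" "intq (2 *\<^sub>R lam)" using Psi_iff by auto
  have P: "Pchar lam (character R D lam)" using character_P l' by blast
  show ?thesis unfolding vp_def
  proof (intro conjI ballI)
    show "winv (character R D lam)" using P unfolding Pchar_def by blast
    fix k assume k: "k \<in> ks (character R D lam)"
    then have i: "intq (k - lam)" using P unfolding Pchar_def by blast
    have "k = (k - lam) + lam" by simp
    then show "wl k" using wl_add[OF intq_wl[OF i] l'(1)] by metis
    have "2 *\<^sub>R k = 2 *\<^sub>R (k - lam) + 2 *\<^sub>R lam" by (simp add: algebra_simps)
    moreover have "intq (2 *\<^sub>R (k - lam))" using intq_smult[OF i, of 2] by simp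
    ultimately show "intq (2 *\<^sub>R k)" using intq_add l'(3) by metis
  qed
qed

lemma cspan_vp: "x \<in> cspan (character R D ` Psi R D) \<Longrightarrow> vp x"
  unfolding cspan_def using vp_char by (auto intro!: vp_sum vp_scal)

lemma vp_cspan:
  assumes f: "vp f"
  shows "f \<in> cspan (character R D ` Psi R D)"
proof -
  let ?A = "alt R rh"
  let ?g = "f * ?A"
  have fw: "winv f" using f unfolding vp_def by blast
  have ag: "anti ?g" by (rule anti_mult[OF fw anti_alt])
  let ?S = "{mu\<in>ks ?g. sdom mu}"
  have fin: "finite ?S" by simp
  have dg: "?g = (\<Sum>mu\<in>?S. scal (lk ?g mu) (alt R mu))" by (rule decomp[OF ag])
  have inPsi: "mu - rh \<in> Psi R D" if mu: "mu \<in> ?S" for mu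
  proof -
    obtain k b where kb: "k \<in> ks f" "b \<in> ks ?A" "mu = k + b" using ks_mult mu by blast
    obtain w where w: "w \<in> W" "w rh = b" using alt_keys kb(2) by blast
    have wk: "wl k" and ik: "intq (2 *\<^sub>R k)" using f kb(1) unfolding vp_def by auto
    have wb: "wl b" using wl_W[OF rho_wl w(1)] w(2) by simp
    have wmu: "wl mu" using kb(3) wl_add[OF wk wb] by simp
    have "wl (mu - rh)" using wl_sub[OF wmu rho_wl] .
    moreover have "dom (mu - rh)" using sdom_minus_rho[OF wmu] mu by auto
    moreover have "intq (2 *\<^sub>R (mu - rh))"
    proof -
      have ir: "intq (rh - b)" using wl_diff[OF rho_wl w(1)] w(2) by simp
      have "2 *\<^sub>R (mu - rh) = 2 *\<^sub>R k - 2 *\<^sub>R (rh - b)" using kb(3) by (simp add: algebra_simps)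
      moreover have "intq (2 *\<^sub>R (rh - b))" using intq_smult[OF ir, of 2] by simp
      ultimately show ?thesis using intq_diff[OF ik] by metis
    qed
    ultimately show ?thesis using Psi_iff by blast
  qed
  define h where "h = (\<Sum>mu\<in>?S. scal (lk ?g mu) (character R D (mu - rh)))"
  have "h * ?A = (\<Sum>mu\<in>?S. scal (lk ?g mu) (character R D (mu - rh) * ?A))"
    unfolding h_def by (simp add: sum_distrib_right scal_mult2)
  also have "\<dots> = (\<Sum>mu\<in>?S. scal (lk ?g mu) (alt R mu))"
  proof (rule sum.cong)
    fix mu assume mu: "mu \<in> ?S"
    have "Pchar (mu - rh) (character R D (mu - rh))"
      using character_P inPsi[OF mu] Psi_iff by blast
    then have "character R D (mu - rh) * ?A = alt R mu" unfolding Pchar_def by simp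
    then show "scal (lk ?g mu) (character R D (mu - rh) * ?A) = scal (lk ?g mu) (alt R mu)" by simp
  qed simp
  finally have "h * ?A = ?g" using dg by simp
  then have "(f - h) * ?A = 0" by (simp add: left_diff_distrib)
  then have "f = h" using cancel[of "f - h"] by simp
  also have "h \<in> cspan (character R D ` Psi R D)"
    unfolding h_def by (rule cspan_sum[OF fin]) (use inPsi in blast)
  finally show ?thesis .
qed

lemma image_vp: "th ` U0ev_W R = {f. vp f}"
proof
  show "th ` U0ev_W R \<subseteq> {f. vp f}"
  proof
    fix y assume "y \<in> th ` U0ev_W R"
    then obtain x where x: "x \<in> U0ev_W R" "y = th x" by blast
    have xk: "ks x \<subseteq> even_lattice R" and xi: "\<forall>w\<in>W. \<forall>mu. lk x (w mu) = lk x mu"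
      using x(1) unfolding U0ev_W_def by auto
    have "winv (th x)" unfolding winv_def
    proof (intro ballI allI)
      fix w v assume w: "w \<in> W"
      have "lk (th x) (w v) = lk x (w (2 *\<^sub>R v))" by (simp add: lk_th W_scale[OF w])
      also have "\<dots> = lk (th x) v" using xi w by (simp add: lk_th)
      finally show "lk (th x) (w v) = lk (th x) v" .
    qed
    moreover have "wl k \<and> intq (2 *\<^sub>R k)" if k: "k \<in> ks (th x)" for k
    proof -
      have "2 *\<^sub>R k \<in> ks x" using k by (simp add: in_keys_iff lk_th)
      then have e: "2 *\<^sub>R k \<in> even_lattice R" using xk by blast
      then have "intq (2 *\<^sub>R k)" unfolding even_lattice_def using intq_root_lattice by blast
      moreover obtain l where l: "l \<in> weight_lattice R" "2 *\<^sub>R k = 2 *\<^sub>R l"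
        using e unfolding even_lattice_def by blast
      then have "k = l" by simp
      then have "wl k" using l(1) wl_iff by simp
      ultimately show ?thesis by blast
    qed
    ultimately show "y \<in> {f. vp f}" unfolding vp_def x(2) by blast
  qed
  show "{f. vp f} \<subseteq> th ` U0ev_W R"
  proof
    fix f assume "f \<in> {f. vp f}"
    then have f: "vp f" by simp
    have "dbl f \<in> U0ev_W R" unfolding U0ev_W_def
    proof (intro CollectI conjI subsetI ballI allI)
      fix k assume k: "k \<in> ks (dbl f)"
      then have "(1/2) *\<^sub>R k \<in> ks f" by (simp add: in_keys_iff lk_dbl)
      then have h: "wl ((1/2) *\<^sub>R k)" "intq (2 *\<^sub>R ((1/2) *\<^sub>R k))" using f unfolding vp_def by auto
      have "k \<in> root_lattice R" using h(2) intq_root_lattice by simp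
      moreover have "k = 2 *\<^sub>R ((1/2) *\<^sub>R k)" by simp
      then have "k \<in> (\<lambda>v. 2 *\<^sub>R v) ` weight_lattice R" using h(1) wl_iff by blast
      ultimately show "k \<in> even_lattice R" unfolding even_lattice_def by blast
    next
      fix w mu assume w: "w \<in> W"
      have "lk (dbl f) (w mu) = lk f (w ((1/2) *\<^sub>R mu))" by (simp add: lk_dbl W_scale[OF w])
      also have "\<dots> = lk f ((1/2) *\<^sub>R mu)" using f w unfolding vp_def winv_def by blast
      finally show "lk (dbl f) (w mu) = lk (dbl f) mu" by (simp add: lk_dbl)
    qed
    then show "f \<in> th ` U0ev_W R" using th_dbl[of f] by (metis image_eqI)
  qed
qed

lemma image_th: "th ` U0ev_W R = cspan (character R D ` Psi R D)"
  unfolding image_vp using vp_cspan cspan_vp by blast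

lemma th_orbit: "a \<in> even_lattice R \<Longrightarrow>
   th (\<Sum>w\<in>W. gexp (w a)) = (\<Sum>w\<in>W. gexp (w ((1/2) *\<^sub>R a)))"
  unfolding th_def gexp_def by (simp add: pmap_sum W_scale)

lemma th_rep: "x \<in> U0ev_W R \<Longrightarrow> th x \<in> rep_ring R D"
proof -
  assume "x \<in> U0ev_W R"
  then have "th x \<in> cspan (character R D ` Psi R D)" using image_th by blast
  moreover have "Psi R D \<subseteq> dominant R D" unfolding Psi_def by blast
  then have "cspan (character R D ` Psi R D) \<subseteq> rep_ring R D"
    unfolding rep_ring_def by (intro cspan_mono image_mono)
  ultimately show ?thesis by blast
qed

end

theorem lemma3p3:
  fixes R D :: "(real^'n::finite) set"
  assumes "root_system R" and "irreducible_rs R" and "is_base R D"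
  shows "\<exists>\<theta> :: 'n gring \<Rightarrow> 'n gring.
     (\<forall>x\<in>U0ev_W R. \<theta> x \<in> rep_ring R D) \<and>
     (\<forall>x\<in>U0ev_W R. \<forall>y\<in>U0ev_W R. \<theta> (x + y) = \<theta> x + \<theta> y) \<and>
     (\<forall>x\<in>U0ev_W R. \<forall>y\<in>U0ev_W R. \<theta> (x * y) = \<theta> x * \<theta> y) \<and>
     (\<forall>c. \<forall>x\<in>U0ev_W R. \<theta> (scal c x) = scal c (\<theta> x)) \<and>
     \<theta> 1 = 1 \<and>
     inj_on \<theta> (U0ev_W R) \<and>
     (\<forall>a\<in>even_lattice R.
        \<theta> (\<Sum>w\<in>weyl_group R. gexp (w a)) = (\<Sum>w\<in>weyl_group R. gexp (w ((1/2) *\<^sub>R a)))) \<and>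
     \<theta> ` U0ev_W R = cspan (character R D ` Psi R D)"
proof -
  interpret rsys R D using assms by unfold_locales
  show ?thesis
    apply (rule exI[of _ th])
    using th_rep th_add th_mult th_scal th_one inj_on_subset[OF th_inj] th_orbit image_th
    by blast
qed


end
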